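(* The subgroup of Brunnian braids in $P_n$, namely $\bigcap_{i=1}^n Q_{\{i\}}$, is equal to the subgroup of $P_n$ generated by all monic commutators $x$ with $\sigma(x)=N=\{1,\dots,n\}$.
   Context: $P_n$ denotes the pure braid group on $n$ strands, generated by elements $p_{a,b}$ for $1\le a<b\le n$ subject to the relations: (A) $p_{a,b}p_{a,c}p_{b,c}=p_{a,c}p_{b,c}p_{a,b}=p_{b,c}p_{a,b}p_{a,c}$ for $1\le a<b<c\le n$; (B) $p_{a,b}p_{c,d}=p_{c,d}p_{a,b}$ and $p_{a,d}p_{b,c}=p_{b,c}p_{a,d}$ for $1\le a<b<c<d\le n$; (C) $p_{a,c}p_{b,c}^{-1}p_{b,d}p_{b,c}=p_{b,c}^{-1}p_{b,d}p_{b,c}p_{a,c}$ for $1\le a<b<c<d\le n$. Let $N=\{1,\dots,n\}$. For $S\subseteq N$: $P_S$ is the subgroup generated by the $p_{a,b}$ with $a,b\in S$; $Q_S$ is the subgroup generated by the $p_{a,b}$ with $a\in S$ or $b\in S$. A pure braid is Brunnian if deleting any single strand gives the trivial braid, i.e. it lies in $Q_{\{i\}}$ for every $i\in N$. Commutator convention: $[x,y]=x^{-1}y^{-1}xy$. Monic commutators are defined recursively: each $p_{a,b}$ and $p_{a,b}^{-1}$ ($1\le a<b\le n$) is a monic commutator; if $x,y$ are monic commutators and $[x,y]\neq1$, then $[x,y]$ is a monic commutator. The support $\sigma(x)$ of $x\in P_n$ is the intersection of all $S\subseteq N$ such that $x\in P_S$. *)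

theory Defs
  imports "HOL-Algebra.Group" "HOL-Algebra.Generated_Groups"
begin

text \<open>A letter is ((a,b), True) for p_{a,b} and
  ((a,b), False) for its inverse.\<close>

type_synonym pb_letter = "(nat \<times> nat) \<times> bool"
type_synonym pb_word = "pb_letter list"

definition pb_letters :: "nat \<Rightarrow> pb_letter set" where
  "pb_letters n = {((a,b),e). 1 \<le> a \<and> a < b \<and> b \<le> n}"

definition pb_words :: "nat \<Rightarrow> pb_word set" where
  "pb_words n = {w. set w \<subseteq> pb_letters n}"

fun inv_letter :: "pb_letter \<Rightarrow> pb_letter" where
  "inv_letter (g, e) = (g, \<not> e)"

definition pw :: "nat \<Rightarrow> nat \<Rightarrow> pb_word" where
  "pw a b = [((a,b), True)]"

definition pwi :: "nat \<Rightarrow> nat \<Rightarrow> pb_word" where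
  "pwi a b = [((a,b), False)]"

definition pb_rels :: "nat \<Rightarrow> (pb_word \<times> pb_word) set" where
  "pb_rels n =
     {(pw a b @ pw a c @ pw b c, pw a c @ pw b c @ pw a b) | a b c.
         1 \<le> a \<and> a < b \<and> b < c \<and> c \<le> n}
   \<union> {(pw a c @ pw b c @ pw a b, pw b c @ pw a b @ pw a c) | a b c.
         1 \<le> a \<and> a < b \<and> b < c \<and> c \<le> n}
   \<union> {(pw a b @ pw c d, pw c d @ pw a b) | a b c d.
         1 \<le> a \<and> a < b \<and> b < c \<and> c < d \<and> d \<le> n}
   \<union> {(pw a d @ pw b c, pw b c @ pw a d) | a b c d.
         1 \<le> a \<and> a < b \<and> b < c \<and> c < d \<and> d \<le> n}
   \<union> {(pw a c @ pwi b c @ pw b d @ pw b c, pwi b c @ pw b d @ pw b c @ pw a c) | a b c d.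
         1 \<le> a \<and> a < b \<and> b < c \<and> c < d \<and> d \<le> n}"

inductive pb_eq :: "nat \<Rightarrow> pb_word \<Rightarrow> pb_word \<Rightarrow> bool" for n where
  refl: "w \<in> pb_words n \<Longrightarrow> pb_eq n w w"
| sym: "pb_eq n u v \<Longrightarrow> pb_eq n v u"
| trans: "pb_eq n u v \<Longrightarrow> pb_eq n v w \<Longrightarrow> pb_eq n u w"
| cong: "pb_eq n u v \<Longrightarrow> x \<in> pb_words n \<Longrightarrow> y \<in> pb_words n \<Longrightarrow> pb_eq n (x @ u @ y) (x @ v @ y)"
| cancel: "l \<in> pb_letters n \<Longrightarrow> pb_eq n [l, inv_letter l] []"
| rel: "(u, v) \<in> pb_rels n \<Longrightarrow> pb_eq n u v"

definition pb_rel :: "nat \<Rightarrow> pb_word rel" where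
  "pb_rel n = {(u, v). pb_eq n u v}"

definition cls :: "nat \<Rightarrow> pb_word \<Rightarrow> pb_word set" where
  "cls n w = pb_rel n `` {w}"

definition PB :: "nat \<Rightarrow> pb_word set monoid" where
  "PB n = \<lparr> carrier = Equiv_Relations.quotient (pb_words n) (pb_rel n),
           monoid.mult = (\<lambda>A B. \<Union>u\<in>A. \<Union>v\<in>B. cls n (u @ v)),
           one = cls n [] \<rparr>"

definition pgen :: "nat \<Rightarrow> nat \<Rightarrow> nat \<Rightarrow> pb_word set" where
  "pgen n a b = cls n (pw a b)"

definition PS :: "nat \<Rightarrow> nat set \<Rightarrow> pb_word set set" where
  "PS n S = generate (PB n) {pgen n a b | a b. 1 \<le> a \<and> a < b \<and> b \<le> n \<and> a \<in> S \<and> b \<in> S}"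

definition QS :: "nat \<Rightarrow> nat set \<Rightarrow> pb_word set set" where
  "QS n S = generate (PB n) {pgen n a b | a b. 1 \<le> a \<and> a < b \<and> b \<le> n \<and> (a \<in> S \<or> b \<in> S)}"

definition commut :: "('a, 'b) monoid_scheme \<Rightarrow> 'a \<Rightarrow> 'a \<Rightarrow> 'a" where
  "commut G x y = inv\<^bsub>G\<^esub> x \<otimes>\<^bsub>G\<^esub> inv\<^bsub>G\<^esub> y \<otimes>\<^bsub>G\<^esub> x \<otimes>\<^bsub>G\<^esub> y"

inductive_set monic :: "nat \<Rightarrow> pb_word set set" for n where
  gen: "1 \<le> a \<Longrightarrow> a < b \<Longrightarrow> b \<le> n \<Longrightarrow> pgen n a b \<in> monic n"
| gen_inv: "1 \<le> a \<Longrightarrow> a < b \<Longrightarrow> b \<le> n \<Longrightarrow> inv\<^bsub>PB n\<^esub> (pgen n a b) \<in> monic n"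
| comm: "x \<in> monic n \<Longrightarrow> y \<in> monic n \<Longrightarrow> commut (PB n) x y \<noteq> \<one>\<^bsub>PB n\<^esub>
          \<Longrightarrow> commut (PB n) x y \<in> monic n"

definition supp :: "nat \<Rightarrow> pb_word set \<Rightarrow> nat set" where
  "supp n x = \<Inter> {S. S \<subseteq> {1..n} \<and> x \<in> PS n S}"

definition brunnian :: "nat \<Rightarrow> pb_word set set" where
  "brunnian n = {x \<in> carrier (PB n). \<forall>i\<in>{1..n}. x \<in> QS n {i}}"

end

theory Submission
  imports Defs
begin

lemma pw_words: "1 \<le> a \<Longrightarrow> a < b \<Longrightarrow> b \<le> n \<Longrightarrow> pw a b \<in> pb_words n"
  by (simp add: pw_def pb_words_def pb_letters_def)

lemma pwi_words: "1 \<le> a \<Longrightarrow> a < b \<Longrightarrow> b \<le> n \<Longrightarrow> pwi a b \<in> pb_words n"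
  by (simp add: pwi_def pb_words_def pb_letters_def)

lemma words_append[simp]: "u @ v \<in> pb_words n \<longleftrightarrow> u \<in> pb_words n \<and> v \<in> pb_words n"
  by (auto simp: pb_words_def)

lemma words_Cons[simp]: "l # v \<in> pb_words n \<longleftrightarrow> l \<in> pb_letters n \<and> v \<in> pb_words n"
  by (auto simp: pb_words_def)

lemma words_Nil[simp]: "[] \<in> pb_words n"
  by (auto simp: pb_words_def)

lemma inv_letter_letters[simp]: "inv_letter l \<in> pb_letters n \<longleftrightarrow> l \<in> pb_letters n"
  by (cases l) (auto simp: pb_letters_def)

lemma inv_letter_inv[simp]: "inv_letter (inv_letter l) = l"
  by (cases l) auto

lemma rels_words: "(u, v) \<in> pb_rels n \<Longrightarrow> u \<in> pb_words n \<and> v \<in> pb_words n"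
  unfolding pb_rels_def
  apply (elim UnE CollectE exE conjE)
  apply (simp_all add: pw_words pwi_words)
  done

lemma pb_eq_words: "pb_eq n u v \<Longrightarrow> u \<in> pb_words n \<and> v \<in> pb_words n"
  by (induction rule: pb_eq.induct) (auto dest: rels_words)

lemma pb_eq_append:
  assumes "pb_eq n u v" "pb_eq n u' v'"
  shows "pb_eq n (u @ u') (v @ v')"
proof -
  have w: "u \<in> pb_words n" "v \<in> pb_words n" "u' \<in> pb_words n" "v' \<in> pb_words n"
    using assms pb_eq_words by blast+
  have "pb_eq n ([] @ u @ u') ([] @ v @ u')"
    by (rule pb_eq.cong[OF assms(1)]) (use w in auto)
  moreover have "pb_eq n (v @ u' @ []) (v @ v' @ [])"
    by (rule pb_eq.cong[OF assms(2)]) (use w in auto)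
  ultimately show ?thesis by (auto intro: pb_eq.trans)
qed

lemma in_cls: "v \<in> cls n u \<longleftrightarrow> pb_eq n u v"
  by (simp add: cls_def pb_rel_def)

lemma cls_eqI: "pb_eq n u v \<Longrightarrow> cls n u = cls n v"
  unfolding cls_def pb_rel_def
  by (auto intro: pb_eq.trans pb_eq.sym)

lemma carrier_PB: "carrier (PB n) = {cls n w | w. w \<in> pb_words n}"
  by (auto simp: PB_def quotient_def cls_def)

lemma cls_carrier: "w \<in> pb_words n \<Longrightarrow> cls n w \<in> carrier (PB n)"
  unfolding carrier_PB by blast

lemma mult_cls:
  assumes "u \<in> pb_words n" "v \<in> pb_words n"
  shows "cls n u \<otimes>\<^bsub>PB n\<^esub> cls n v = cls n (u @ v)"
proof -
  have e: "\<And>u' v'. u' \<in> cls n u \<Longrightarrow> v' \<in> cls n v \<Longrightarrow> cls n (u' @ v') = cls n (u @ v)"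
    by (metis cls_eqI in_cls pb_eq.sym pb_eq_append)
  have uv: "u \<in> cls n u" "v \<in> cls n v"
    using assms by (auto simp: in_cls intro: pb_eq.refl)
  have "(\<Union>u'\<in>cls n u. \<Union>v'\<in>cls n v. cls n (u' @ v')) = cls n (u @ v)"
  proof
    show "(\<Union>u'\<in>cls n u. \<Union>v'\<in>cls n v. cls n (u' @ v')) \<subseteq> cls n (u @ v)"
      using e by blast
    show "cls n (u @ v) \<subseteq> (\<Union>u'\<in>cls n u. \<Union>v'\<in>cls n v. cls n (u' @ v'))"
      using uv by blast
  qed
  then show ?thesis by (simp add: PB_def)
qed

lemma one_PB: "\<one>\<^bsub>PB n\<^esub> = cls n []"
  by (simp add: PB_def)

definition invw :: "pb_word \<Rightarrow> pb_word" where
  "invw w = rev (map inv_letter w)"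

lemma invw_words: "w \<in> pb_words n \<Longrightarrow> invw w \<in> pb_words n"
  by (induction w) (auto simp: invw_def)

lemma invw_cancel: "w \<in> pb_words n \<Longrightarrow> pb_eq n (invw w @ w) []"
proof (induction w)
  case Nil
  then show ?case by (simp add: invw_def pb_eq.refl)
next
  case (Cons l w)
  have l: "l \<in> pb_letters n" and w: "w \<in> pb_words n" using Cons.prems by auto
  have c: "pb_eq n [inv_letter l, l] []"
    using pb_eq.cancel[of "inv_letter l" n] l by simp
  have "pb_eq n (invw w @ [inv_letter l, l] @ w) (invw w @ [] @ w)"
    by (rule pb_eq.cong[OF c]) (use w invw_words in auto)
  then have "pb_eq n (invw (l # w) @ l # w) (invw w @ w)"
    by (simp add: invw_def)
  then show ?case using Cons.IH[OF w] by (blast intro: pb_eq.trans)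
qed

lemma group_PB: "group (PB n)"
proof (rule groupI)
  fix x y assume "x \<in> carrier (PB n)" "y \<in> carrier (PB n)"
  then obtain u v where "x = cls n u" "y = cls n v" "u \<in> pb_words n" "v \<in> pb_words n"
    by (auto simp: carrier_PB)
  then show "x \<otimes>\<^bsub>PB n\<^esub> y \<in> carrier (PB n)" by (simp add: mult_cls cls_carrier)
next
  show "\<one>\<^bsub>PB n\<^esub> \<in> carrier (PB n)" by (simp add: one_PB cls_carrier)
next
  fix x y z assume "x \<in> carrier (PB n)" "y \<in> carrier (PB n)" "z \<in> carrier (PB n)"
  then obtain u v w where "x = cls n u" "y = cls n v" "z = cls n w"
    "u \<in> pb_words n" "v \<in> pb_words n" "w \<in> pb_words n"
    by (auto simp: carrier_PB)
  then show "x \<otimes>\<^bsub>PB n\<^esub> y \<otimes>\<^bsub>PB n\<^esub> z = x \<otimes>\<^bsub>PB n\<^esub> (y \<otimes>\<^bsub>PB n\<^esub> z)"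
    by (simp add: mult_cls)
next
  fix x assume "x \<in> carrier (PB n)"
  then obtain u where "x = cls n u" "u \<in> pb_words n"
    by (auto simp: carrier_PB)
  then show "\<one>\<^bsub>PB n\<^esub> \<otimes>\<^bsub>PB n\<^esub> x = x" by (simp add: one_PB mult_cls)
next
  fix x assume "x \<in> carrier (PB n)"
  then obtain u where u: "x = cls n u" "u \<in> pb_words n"
    by (auto simp: carrier_PB)
  then have "cls n (invw u) \<otimes>\<^bsub>PB n\<^esub> x = \<one>\<^bsub>PB n\<^esub>"
    by (simp add: mult_cls invw_words one_PB cls_eqI invw_cancel)
  then show "\<exists>y\<in>carrier (PB n). y \<otimes>\<^bsub>PB n\<^esub> x = \<one>\<^bsub>PB n\<^esub>"
    using u invw_words cls_carrier by blast
qed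

definition nrm :: "('a, 'b) monoid_scheme \<Rightarrow> 'a set \<Rightarrow> 'a set" where
  "nrm G H = {g \<in> carrier G. \<forall>x\<in>H. inv\<^bsub>G\<^esub> g \<otimes>\<^bsub>G\<^esub> x \<otimes>\<^bsub>G\<^esub> g \<in> H \<and> g \<otimes>\<^bsub>G\<^esub> x \<otimes>\<^bsub>G\<^esub> inv\<^bsub>G\<^esub> g \<in> H}"

definition trip :: "('a, 'b) monoid_scheme \<Rightarrow> 'a \<Rightarrow> 'a \<Rightarrow> 'a \<Rightarrow> bool" where
  "trip G P R S \<longleftrightarrow> P \<otimes>\<^bsub>G\<^esub> R \<otimes>\<^bsub>G\<^esub> S = R \<otimes>\<^bsub>G\<^esub> S \<otimes>\<^bsub>G\<^esub> P
     \<and> R \<otimes>\<^bsub>G\<^esub> S \<otimes>\<^bsub>G\<^esub> P = S \<otimes>\<^bsub>G\<^esub> P \<otimes>\<^bsub>G\<^esub> R"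

context group
begin

lemma inv_cancel_l[simp]: "x \<in> carrier G \<Longrightarrow> y \<in> carrier G \<Longrightarrow> inv x \<otimes> (x \<otimes> y) = y"
  by (simp add: m_assoc[symmetric])

lemma inv_cancel_r[simp]: "x \<in> carrier G \<Longrightarrow> y \<in> carrier G \<Longrightarrow> x \<otimes> (inv x \<otimes> y) = y"
  by (simp add: m_assoc[symmetric])

lemma conj_mult: "h \<in> carrier G \<Longrightarrow> x \<in> carrier G \<Longrightarrow> y \<in> carrier G \<Longrightarrow>
   inv h \<otimes> (x \<otimes> y) \<otimes> h = (inv h \<otimes> x \<otimes> h) \<otimes> (inv h \<otimes> y \<otimes> h)"
  by (simp add: m_assoc)

lemma conj_inv: "h \<in> carrier G \<Longrightarrow> x \<in> carrier G \<Longrightarrow>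
   inv h \<otimes> inv x \<otimes> h = inv (inv h \<otimes> x \<otimes> h)"
  by (simp add: inv_mult_group m_assoc)

lemma nrm_subgroup:
  assumes H: "subgroup H G"
  shows "subgroup (nrm G H) G"
proof -
  have HC: "\<And>x. x \<in> H \<Longrightarrow> x \<in> carrier G" using subgroup.subset[OF H] by blast
  show ?thesis
  proof (rule subgroupI)
    show "nrm G H \<subseteq> carrier G" by (auto simp: nrm_def)
    show "nrm G H \<noteq> {}"
    proof -
      have "\<one> \<in> nrm G H" by (auto simp: nrm_def HC)
      then show ?thesis by blast
    qed
  next
    fix a assume a: "a \<in> nrm G H"
    then show "inv a \<in> nrm G H" by (auto simp: nrm_def)
  next
    fix a b assume a: "a \<in> nrm G H" and b: "b \<in> nrm G H"
    have ac: "a \<in> carrier G" and bc: "b \<in> carrier G" using a b by (auto simp: nrm_def)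
    show "a \<otimes> b \<in> nrm G H"
      unfolding nrm_def
    proof (intro CollectI conjI ballI)
      show "a \<otimes> b \<in> carrier G" using ac bc by simp
    next
      fix x assume x: "x \<in> H"
      have x1: "inv a \<otimes> x \<otimes> a \<in> H" using a x by (auto simp: nrm_def)
      then have "inv b \<otimes> (inv a \<otimes> x \<otimes> a) \<otimes> b \<in> H" using b by (auto simp: nrm_def)
      then show "inv (a \<otimes> b) \<otimes> x \<otimes> (a \<otimes> b) \<in> H"
        using ac bc HC[OF x] by (simp add: inv_mult_group m_assoc)
      have x2: "b \<otimes> x \<otimes> inv b \<in> H" using b x by (auto simp: nrm_def)
      then have "a \<otimes> (b \<otimes> x \<otimes> inv b) \<otimes> inv a \<in> H" using a by (auto simp: nrm_def)
      then show "a \<otimes> b \<otimes> x \<otimes> inv (a \<otimes> b) \<in> H"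
        using ac bc HC[OF x] by (simp add: inv_mult_group m_assoc)
    qed
  qed
qed

lemma subgroup_nrm: "subgroup H G \<Longrightarrow> H \<subseteq> nrm G H"
  unfolding nrm_def
  by (auto intro!: subgroup.m_closed subgroup.m_inv_closed dest: subgroup.mem_carrier)

lemma nrm_generate:
  assumes S: "S \<subseteq> carrier G" and h: "h \<in> carrier G"
    and c1: "\<And>s. s \<in> S \<Longrightarrow> inv h \<otimes> s \<otimes> h \<in> generate G S"
    and c2: "\<And>s. s \<in> S \<Longrightarrow> h \<otimes> s \<otimes> inv h \<in> generate G S"
  shows "h \<in> nrm G (generate G S)"
proof -
  let ?H = "generate G S"
  have sg: "subgroup ?H G" by (rule generate_is_subgroup[OF S])
  have HC: "\<And>x. x \<in> ?H \<Longrightarrow> x \<in> carrier G" using subgroup.subset[OF sg] by blast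
  have K: "?H \<subseteq> {x \<in> carrier G. inv g \<otimes> x \<otimes> g \<in> ?H}"
    if g: "g \<in> carrier G" and cg: "\<And>s. s \<in> S \<Longrightarrow> inv g \<otimes> s \<otimes> g \<in> ?H" for g
  proof (rule generate_subgroup_incl)
    show "S \<subseteq> {x \<in> carrier G. inv g \<otimes> x \<otimes> g \<in> ?H}" using S cg by auto
    show "subgroup {x \<in> carrier G. inv g \<otimes> x \<otimes> g \<in> ?H} G"
    proof (rule subgroupI)
      show "{x \<in> carrier G. inv g \<otimes> x \<otimes> g \<in> ?H} \<noteq> {}"
        using g subgroup.one_closed[OF sg] by (auto intro!: exI[of _ \<one>])
    next
      fix a assume "a \<in> {x \<in> carrier G. inv g \<otimes> x \<otimes> g \<in> ?H}"
      then show "inv a \<in> {x \<in> carrier G. inv g \<otimes> x \<otimes> g \<in> ?H}"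
        using g by (auto simp: conj_inv intro: subgroup.m_inv_closed[OF sg])
    next
      fix a b assume "a \<in> {x \<in> carrier G. inv g \<otimes> x \<otimes> g \<in> ?H}" "b \<in> {x \<in> carrier G. inv g \<otimes> x \<otimes> g \<in> ?H}"
      then show "a \<otimes> b \<in> {x \<in> carrier G. inv g \<otimes> x \<otimes> g \<in> ?H}"
        using g by (auto simp: conj_mult intro: subgroup.m_closed[OF sg])
    qed auto
  qed
  have K1: "?H \<subseteq> {x \<in> carrier G. inv h \<otimes> x \<otimes> h \<in> ?H}" by (rule K[OF h c1])
  have K2: "?H \<subseteq> {x \<in> carrier G. inv (inv h) \<otimes> x \<otimes> inv h \<in> ?H}"
    by (rule K) (use h c2 in auto)
  show ?thesis unfolding nrm_def using K1 K2 h by auto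
qed

lemma nrm_all:
  assumes H: "subgroup H G" and T: "T \<subseteq> nrm G H" and gen: "generate G T = carrier G"
  shows "nrm G H = carrier G"
proof -
  have "generate G T \<subseteq> nrm G H"
    by (rule generate_subgroup_incl[OF T nrm_subgroup[OF H]])
  then show ?thesis using gen by (auto simp: nrm_def)
qed

lemma conj_step_b:
  assumes H: "subgroup H G" and h: "h \<in> carrier G" and a: "a \<in> carrier G" and b: "b \<in> carrier G"
    and comm: "h \<otimes> (a \<otimes> b) = (a \<otimes> b) \<otimes> h" and ab: "a \<otimes> b \<in> H"
    and ca: "inv h \<otimes> a \<otimes> h \<in> H"
  shows "inv h \<otimes> b \<otimes> h \<in> H"
proof -
  have "inv h \<otimes> (a \<otimes> b) \<otimes> h = a \<otimes> b"
    using comm h a b by (metis inv_cancel_l m_assoc m_closed inv_closed)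
  then have e: "inv h \<otimes> b \<otimes> h = inv (inv h \<otimes> a \<otimes> h) \<otimes> (a \<otimes> b)"
  proof -
    assume q: "inv h \<otimes> (a \<otimes> b) \<otimes> h = a \<otimes> b"
    have "inv (inv h \<otimes> a \<otimes> h) \<otimes> (a \<otimes> b) = inv (inv h \<otimes> a \<otimes> h) \<otimes> (inv h \<otimes> (a \<otimes> b) \<otimes> h)"
      using q by simp
    also have "\<dots> = inv h \<otimes> b \<otimes> h" using h a b by (simp add: inv_mult_group m_assoc)
    finally show ?thesis by simp
  qed
  show ?thesis unfolding e using H ab ca by (auto intro: subgroup.m_closed subgroup.m_inv_closed)
qed

lemma conj_step_a:
  assumes H: "subgroup H G" and h: "h \<in> carrier G" and a: "a \<in> carrier G" and b: "b \<in> carrier G"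
    and comm: "h \<otimes> (a \<otimes> b) = (a \<otimes> b) \<otimes> h" and ab: "a \<otimes> b \<in> H"
    and cb: "inv h \<otimes> b \<otimes> h \<in> H"
  shows "inv h \<otimes> a \<otimes> h \<in> H"
proof -
  have "inv h \<otimes> (a \<otimes> b) \<otimes> h = a \<otimes> b"
    using comm h a b by (metis inv_cancel_l m_assoc m_closed inv_closed)
  then have e: "inv h \<otimes> a \<otimes> h = (a \<otimes> b) \<otimes> inv (inv h \<otimes> b \<otimes> h)"
  proof -
    assume q: "inv h \<otimes> (a \<otimes> b) \<otimes> h = a \<otimes> b"
    have "(a \<otimes> b) \<otimes> inv (inv h \<otimes> b \<otimes> h) = (inv h \<otimes> (a \<otimes> b) \<otimes> h) \<otimes> inv (inv h \<otimes> b \<otimes> h)"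
      using q by simp
    also have "\<dots> = inv h \<otimes> a \<otimes> h" using h a b by (simp add: inv_mult_group m_assoc)
    finally show ?thesis by simp
  qed
  show ?thesis unfolding e using H ab cb by (auto intro: subgroup.m_closed subgroup.m_inv_closed)
qed


lemma comm_inv: "h \<in> carrier G \<Longrightarrow> x \<in> carrier G \<Longrightarrow> h \<otimes> x = x \<otimes> h \<Longrightarrow> inv h \<otimes> x = x \<otimes> inv h"
proof -
  assume c: "h \<in> carrier G" "x \<in> carrier G" and e: "h \<otimes> x = x \<otimes> h"
  have "inv h \<otimes> x = inv h \<otimes> (x \<otimes> h) \<otimes> inv h" using c by (simp add: m_assoc)
  also have "\<dots> = inv h \<otimes> (h \<otimes> x) \<otimes> inv h" using e by simp
  also have "\<dots> = x \<otimes> inv h" using c by (simp add: m_assoc)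
  finally show ?thesis .
qed

lemma comm_conj: "h \<in> carrier G \<Longrightarrow> x \<in> carrier G \<Longrightarrow> h \<otimes> x = x \<otimes> h \<Longrightarrow> inv h \<otimes> x \<otimes> h = x \<and> h \<otimes> x \<otimes> inv h = x"
proof -
  assume c: "h \<in> carrier G" "x \<in> carrier G" and e: "h \<otimes> x = x \<otimes> h"
  have "inv h \<otimes> x \<otimes> h = inv h \<otimes> (h \<otimes> x)" using c e by (simp add: m_assoc)
  moreover have "h \<otimes> x \<otimes> inv h = x \<otimes> h \<otimes> inv h" using e by simp
  ultimately show ?thesis using c by (simp add: m_assoc)
qed

lemma trip_facts:
  assumes c: "P \<in> carrier G" "R \<in> carrier G" "S \<in> carrier G" and t: "trip G P R S"
  shows "P \<otimes> (R \<otimes> S) = (R \<otimes> S) \<otimes> P" "R \<otimes> (S \<otimes> P) = (S \<otimes> P) \<otimes> R"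
    "S \<otimes> (P \<otimes> R) = (P \<otimes> R) \<otimes> S"
    "inv P \<otimes> S \<otimes> P = R \<otimes> S \<otimes> inv R"
    "inv S \<otimes> R \<otimes> S = P \<otimes> R \<otimes> inv P"
    "inv R \<otimes> P \<otimes> R = S \<otimes> P \<otimes> inv S"
proof -
  have h1: "P \<otimes> R \<otimes> S = R \<otimes> S \<otimes> P" and h2: "R \<otimes> S \<otimes> P = S \<otimes> P \<otimes> R"
    using t by (auto simp: trip_def)
  have h3: "P \<otimes> R \<otimes> S = S \<otimes> P \<otimes> R" using h1 h2 by simp
  show "P \<otimes> (R \<otimes> S) = (R \<otimes> S) \<otimes> P" using h1 c by (simp add: m_assoc)
  show "R \<otimes> (S \<otimes> P) = (S \<otimes> P) \<otimes> R" using h2 c by (simp add: m_assoc)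
  show "S \<otimes> (P \<otimes> R) = (P \<otimes> R) \<otimes> S" using h3 c by (simp add: m_assoc)
  have "inv P \<otimes> S \<otimes> P = inv P \<otimes> (S \<otimes> P \<otimes> R) \<otimes> inv R" using c by (simp add: m_assoc)
  also have "\<dots> = inv P \<otimes> (P \<otimes> R \<otimes> S) \<otimes> inv R" using h3 by simp
  also have "\<dots> = R \<otimes> S \<otimes> inv R" using c by (simp add: m_assoc)
  finally show "inv P \<otimes> S \<otimes> P = R \<otimes> S \<otimes> inv R" .
  have "inv S \<otimes> R \<otimes> S = inv S \<otimes> (R \<otimes> S \<otimes> P) \<otimes> inv P" using c by (simp add: m_assoc)
  also have "\<dots> = inv S \<otimes> (S \<otimes> P \<otimes> R) \<otimes> inv P" using h2 by simp
  also have "\<dots> = P \<otimes> R \<otimes> inv P" using c by (simp add: m_assoc)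
  finally show "inv S \<otimes> R \<otimes> S = P \<otimes> R \<otimes> inv P" .
  have "inv R \<otimes> P \<otimes> R = inv R \<otimes> (P \<otimes> R \<otimes> S) \<otimes> inv S" using c by (simp add: m_assoc)
  also have "\<dots> = inv R \<otimes> (R \<otimes> S \<otimes> P) \<otimes> inv S" using h1 by simp
  also have "\<dots> = S \<otimes> P \<otimes> inv S" using c by (simp add: m_assoc)
  finally show "inv R \<otimes> P \<otimes> R = S \<otimes> P \<otimes> inv S" .
qed

lemma triple_z:
  assumes c: "P \<in> carrier G" "R \<in> carrier G" "S \<in> carrier G" and t: "trip G P R S"
    and H: "subgroup H G" and RH: "R \<in> H" and SH: "S \<in> H"
  shows "inv P \<otimes> R \<otimes> P \<in> H \<and> P \<otimes> R \<otimes> inv P \<in> H \<and> inv P \<otimes> S \<otimes> P \<in> H \<and> P \<otimes> S \<otimes> inv P \<in> H"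
proof -
  note f = trip_facts[OF c t]
  have RS: "R \<otimes> S \<in> H" using H RH SH by (rule subgroup.m_closed)
  have a1: "inv P \<otimes> S \<otimes> P \<in> H" unfolding f(4) using H RH SH
    by (auto intro: subgroup.m_closed subgroup.m_inv_closed)
  have a2: "inv P \<otimes> R \<otimes> P \<in> H"
    by (rule conj_step_a[OF H c(1) c(2) c(3) f(1) RS a1])
  have a3: "P \<otimes> R \<otimes> inv P \<in> H" unfolding f(5)[symmetric] using H RH SH
    by (auto intro: subgroup.m_closed subgroup.m_inv_closed)
  have cm: "inv P \<otimes> (R \<otimes> S) = (R \<otimes> S) \<otimes> inv P" using comm_inv f(1) c by simp
  have a4: "inv (inv P) \<otimes> S \<otimes> inv P \<in> H"
    by (rule conj_step_b[OF H _ c(2) c(3) cm RS]) (use a3 c in simp_all)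
  show ?thesis using a1 a2 a3 a4 c by simp
qed

lemma triple_y:
  assumes c: "P \<in> carrier G" "R \<in> carrier G" "S \<in> carrier G" and t: "trip G P R S"
    and H: "subgroup H G" and PH: "P \<in> H" and SH: "S \<in> H"
  shows "inv R \<otimes> P \<otimes> R \<in> H \<and> R \<otimes> P \<otimes> inv R \<in> H \<and> inv R \<otimes> S \<otimes> R \<in> H \<and> R \<otimes> S \<otimes> inv R \<in> H"
proof -
  note f = trip_facts[OF c t]
  have SP: "S \<otimes> P \<in> H" using H SH PH by (rule subgroup.m_closed)
  have a1: "inv R \<otimes> P \<otimes> R \<in> H" unfolding f(6) using H PH SH
    by (auto intro: subgroup.m_closed subgroup.m_inv_closed)
  have a2: "inv R \<otimes> S \<otimes> R \<in> H"
    by (rule conj_step_a[OF H c(2) c(3) c(1) f(2) SP a1])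
  have a3: "R \<otimes> S \<otimes> inv R \<in> H" unfolding f(4)[symmetric] using H PH SH
    by (auto intro: subgroup.m_closed subgroup.m_inv_closed)
  have cm: "inv R \<otimes> (S \<otimes> P) = (S \<otimes> P) \<otimes> inv R" using comm_inv f(2) c by simp
  have a4: "inv (inv R) \<otimes> P \<otimes> inv R \<in> H"
    by (rule conj_step_b[OF H _ c(3) c(1) cm SP]) (use a3 c in simp_all)
  show ?thesis using a1 a2 a3 a4 c by simp
qed

lemma triple_x:
  assumes c: "P \<in> carrier G" "R \<in> carrier G" "S \<in> carrier G" and t: "trip G P R S"
    and H: "subgroup H G" and PH: "P \<in> H" and RH: "R \<in> H"
  shows "inv S \<otimes> P \<otimes> S \<in> H \<and> S \<otimes> P \<otimes> inv S \<in> H \<and> inv S \<otimes> R \<otimes> S \<in> H \<and> S \<otimes> R \<otimes> inv S \<in> H"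
proof -
  note f = trip_facts[OF c t]
  have PR: "P \<otimes> R \<in> H" using H PH RH by (rule subgroup.m_closed)
  have a1: "inv S \<otimes> R \<otimes> S \<in> H" unfolding f(5) using H PH RH
    by (auto intro: subgroup.m_closed subgroup.m_inv_closed)
  have a2: "inv S \<otimes> P \<otimes> S \<in> H"
    by (rule conj_step_a[OF H c(3) c(1) c(2) f(3) PR a1])
  have a3: "S \<otimes> P \<otimes> inv S \<in> H" unfolding f(6)[symmetric] using H PH RH
    by (auto intro: subgroup.m_closed subgroup.m_inv_closed)
  have cm: "inv S \<otimes> (P \<otimes> R) = (P \<otimes> R) \<otimes> inv S" using comm_inv f(3) c by simp
  have a4: "inv (inv S) \<otimes> R \<otimes> inv S \<in> H"
    by (rule conj_step_b[OF H _ c(1) c(2) cm PR]) (use a3 c in simp_all)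
  show ?thesis using a1 a2 a3 a4 c by simp
qed


lemma nrm_conj1: "g \<in> nrm G H \<Longrightarrow> x \<in> H \<Longrightarrow> inv g \<otimes> x \<otimes> g \<in> H"
  by (auto simp: nrm_def)

lemma nrm_conj2: "g \<in> nrm G H \<Longrightarrow> x \<in> H \<Longrightarrow> g \<otimes> x \<otimes> inv g \<in> H"
  by (auto simp: nrm_def)

lemma nrm_carrier: "g \<in> nrm G H \<Longrightarrow> g \<in> carrier G"
  by (auto simp: nrm_def)

context
  fixes A B C D E F
  assumes c: "A \<in> carrier G" "B \<in> carrier G" "C \<in> carrier G" "D \<in> carrier G" "E \<in> carrier G" "F \<in> carrier G"
    and t1: "trip G A B C" and t2: "trip G A D E" and t3: "trip G B D F" and t4: "trip G C E F"
    and AF: "A \<otimes> F = F \<otimes> A" and DC: "D \<otimes> C = C \<otimes> D"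
    and RC: "B \<otimes> inv C \<otimes> E \<otimes> C = inv C \<otimes> E \<otimes> C \<otimes> B"
begin

lemma il_K: "(C \<otimes> B \<otimes> inv C) \<otimes> E = E \<otimes> (C \<otimes> B \<otimes> inv C)"
proof -
  have "(C \<otimes> B \<otimes> inv C) \<otimes> E = C \<otimes> (B \<otimes> inv C \<otimes> E \<otimes> C) \<otimes> inv C" using c by (simp add: m_assoc)
  also have "\<dots> = C \<otimes> (inv C \<otimes> E \<otimes> C \<otimes> B) \<otimes> inv C" using RC by simp
  also have "\<dots> = E \<otimes> (C \<otimes> B \<otimes> inv C)" using c by (simp add: m_assoc)
  finally show ?thesis .
qed

lemma il_BY: "B \<otimes> (inv C \<otimes> E \<otimes> C) = (inv C \<otimes> E \<otimes> C) \<otimes> B"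
  using RC c by (simp add: m_assoc)

lemma il_eq1: "inv E \<otimes> B \<otimes> E = inv (inv E \<otimes> C \<otimes> E) \<otimes> (C \<otimes> B \<otimes> inv C) \<otimes> (inv E \<otimes> C \<otimes> E)"
proof -
  have Ez: "E \<otimes> (C \<otimes> B \<otimes> inv C) \<otimes> inv E = C \<otimes> B \<otimes> inv C"
    using comm_conj[of E "C \<otimes> B \<otimes> inv C"] il_K c by simp
  have "inv E \<otimes> B \<otimes> E = inv E \<otimes> inv C \<otimes> (C \<otimes> B \<otimes> inv C) \<otimes> C \<otimes> E" using c by (simp add: m_assoc)
  also have "\<dots> = inv E \<otimes> inv C \<otimes> (E \<otimes> (C \<otimes> B \<otimes> inv C) \<otimes> inv E) \<otimes> C \<otimes> E" using Ez by simp
  also have "\<dots> = inv (inv E \<otimes> C \<otimes> E) \<otimes> (C \<otimes> B \<otimes> inv C) \<otimes> (inv E \<otimes> C \<otimes> E)"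
    using c by (simp add: m_assoc inv_mult_group)
  finally show ?thesis .
qed

lemma il_eq2: "E \<otimes> B \<otimes> inv E = inv (E \<otimes> C \<otimes> inv E) \<otimes> (C \<otimes> B \<otimes> inv C) \<otimes> (E \<otimes> C \<otimes> inv E)"
proof -
  have Ez: "inv E \<otimes> (C \<otimes> B \<otimes> inv C) \<otimes> E = C \<otimes> B \<otimes> inv C"
    using comm_conj[of E "C \<otimes> B \<otimes> inv C"] il_K c by simp
  have "E \<otimes> B \<otimes> inv E = E \<otimes> inv C \<otimes> (C \<otimes> B \<otimes> inv C) \<otimes> C \<otimes> inv E" using c by (simp add: m_assoc)
  also have "\<dots> = E \<otimes> inv C \<otimes> (inv E \<otimes> (C \<otimes> B \<otimes> inv C) \<otimes> E) \<otimes> C \<otimes> inv E" using Ez by simp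
  also have "\<dots> = inv (E \<otimes> C \<otimes> inv E) \<otimes> (C \<otimes> B \<otimes> inv C) \<otimes> (E \<otimes> C \<otimes> inv E)"
    using c by (simp add: m_assoc inv_mult_group)
  finally show ?thesis .
qed

lemma il_eq3: "inv B \<otimes> E \<otimes> B = (inv B \<otimes> C \<otimes> B) \<otimes> (inv C \<otimes> E \<otimes> C) \<otimes> inv (inv B \<otimes> C \<otimes> B)"
proof -
  have BY: "B \<otimes> (inv C \<otimes> E \<otimes> C) \<otimes> inv B = inv C \<otimes> E \<otimes> C"
    using comm_conj[of B "inv C \<otimes> E \<otimes> C"] il_BY c by simp
  have "inv B \<otimes> E \<otimes> B = inv B \<otimes> C \<otimes> (inv C \<otimes> E \<otimes> C) \<otimes> inv C \<otimes> B" using c by (simp add: m_assoc)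
  also have "\<dots> = inv B \<otimes> C \<otimes> (B \<otimes> (inv C \<otimes> E \<otimes> C) \<otimes> inv B) \<otimes> inv C \<otimes> B" using BY by simp
  also have "\<dots> = (inv B \<otimes> C \<otimes> B) \<otimes> (inv C \<otimes> E \<otimes> C) \<otimes> inv (inv B \<otimes> C \<otimes> B)"
    using c by (simp add: m_assoc inv_mult_group)
  finally show ?thesis .
qed

lemma il_eq4: "B \<otimes> E \<otimes> inv B = (B \<otimes> C \<otimes> inv B) \<otimes> (inv C \<otimes> E \<otimes> C) \<otimes> inv (B \<otimes> C \<otimes> inv B)"
proof -
  have BY: "inv B \<otimes> (inv C \<otimes> E \<otimes> C) \<otimes> B = inv C \<otimes> E \<otimes> C"
    using comm_conj[of B "inv C \<otimes> E \<otimes> C"] il_BY c by simp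
  have "B \<otimes> E \<otimes> inv B = B \<otimes> C \<otimes> (inv C \<otimes> E \<otimes> C) \<otimes> inv C \<otimes> inv B" using c by (simp add: m_assoc)
  also have "\<dots> = B \<otimes> C \<otimes> (inv B \<otimes> (inv C \<otimes> E \<otimes> C) \<otimes> B) \<otimes> inv C \<otimes> inv B" using BY by simp
  also have "\<dots> = (B \<otimes> C \<otimes> inv B) \<otimes> (inv C \<otimes> E \<otimes> C) \<otimes> inv (B \<otimes> C \<otimes> inv B)"
    using c by (simp add: m_assoc inv_mult_group)
  finally show ?thesis .
qed

lemmas sgI = subgroup.m_closed subgroup.m_inv_closed

lemma il_c:
  assumes H: "subgroup H G" and h: "B \<in> H" "C \<in> H" "F \<in> H"
  shows "inv E \<otimes> B \<otimes> E \<in> H \<and> E \<otimes> B \<otimes> inv E \<in> H"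
proof -
  have w: "inv E \<otimes> C \<otimes> E \<in> H \<and> E \<otimes> C \<otimes> inv E \<in> H"
    using triple_y[OF c(3) c(5) c(6) t4 H h(2) h(3)] by blast
  have z: "C \<otimes> B \<otimes> inv C \<in> H" using H h by (auto intro!: sgI)
  show ?thesis unfolding il_eq1 il_eq2 using w z H by (auto intro!: sgI)
qed

lemma il_b:
  assumes H: "subgroup H G" and h: "A \<in> H" "C \<in> H" "E \<in> H"
  shows "inv B \<otimes> E \<otimes> B \<in> H \<and> B \<otimes> E \<otimes> inv B \<in> H"
proof -
  have u: "inv B \<otimes> C \<otimes> B \<in> H \<and> B \<otimes> C \<otimes> inv B \<in> H"
    using triple_y[OF c(1) c(2) c(3) t1 H h(1) h(2)] by blast
  have Y: "inv C \<otimes> E \<otimes> C \<in> H" using H h by (auto intro!: sgI)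
  show ?thesis unfolding il_eq3 il_eq4 using u Y H by (auto intro!: sgI)
qed

lemma il_a:
  assumes H: "subgroup H G" and h: "A \<in> H" "B \<in> H" "D \<in> H"
  shows "inv E \<otimes> B \<otimes> E \<in> H \<and> E \<otimes> B \<otimes> inv E \<in> H"
proof -
  let ?H0 = "generate G {A, B, D}"
  have S: "{A, B, D} \<subseteq> carrier G" using c by auto
  have H0: "subgroup ?H0 G" by (rule generate_is_subgroup[OF S])
  have inH0: "A \<in> ?H0" "B \<in> ?H0" "D \<in> ?H0" by (auto intro: generate.incl)
  have N: "subgroup (nrm G ?H0) G" by (rule nrm_subgroup[OF H0])
  have Cn: "C \<in> nrm G ?H0"
  proof (rule nrm_generate[OF S c(3)])
    have tx: "inv C \<otimes> A \<otimes> C \<in> ?H0 \<and> C \<otimes> A \<otimes> inv C \<in> ?H0 \<and> inv C \<otimes> B \<otimes> C \<in> ?H0 \<and> C \<otimes> B \<otimes> inv C \<in> ?H0"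
      by (rule triple_x[OF c(1) c(2) c(3) t1 H0 inH0(1) inH0(2)])
    have cd: "inv C \<otimes> D \<otimes> C = D \<and> C \<otimes> D \<otimes> inv C = D" using comm_conj[OF c(3) c(4)] DC by simp
    fix s assume "s \<in> {A, B, D}"
    then show "inv C \<otimes> s \<otimes> C \<in> ?H0" "C \<otimes> s \<otimes> inv C \<in> ?H0" using tx cd inH0 by auto
  qed
  have Fn: "F \<in> nrm G ?H0"
  proof (rule nrm_generate[OF S c(6)])
    have tx: "inv F \<otimes> B \<otimes> F \<in> ?H0 \<and> F \<otimes> B \<otimes> inv F \<in> ?H0 \<and> inv F \<otimes> D \<otimes> F \<in> ?H0 \<and> F \<otimes> D \<otimes> inv F \<in> ?H0"
      by (rule triple_x[OF c(2) c(4) c(6) t3 H0 inH0(2) inH0(3)])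
    have fa: "inv F \<otimes> A \<otimes> F = A \<and> F \<otimes> A \<otimes> inv F = A" using comm_conj[OF c(6) c(1)] AF by simp
    fix s assume "s \<in> {A, B, D}"
    then show "inv F \<otimes> s \<otimes> F \<in> ?H0" "F \<otimes> s \<otimes> inv F \<in> ?H0" using tx fa inH0 by auto
  qed
  have w: "inv E \<otimes> C \<otimes> E \<in> nrm G ?H0 \<and> E \<otimes> C \<otimes> inv E \<in> nrm G ?H0"
    using triple_y[OF c(3) c(5) c(6) t4 N Cn Fn] by blast
  have z: "C \<otimes> B \<otimes> inv C \<in> ?H0" by (rule nrm_conj2[OF Cn inH0(2)])
  have "inv E \<otimes> B \<otimes> E \<in> ?H0 \<and> E \<otimes> B \<otimes> inv E \<in> ?H0"
    unfolding il_eq1 il_eq2 using w z nrm_conj1 by blast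
  moreover have "?H0 \<subseteq> H" by (rule generate_subgroup_incl) (use h H in auto)
  ultimately show ?thesis by blast
qed

lemma il_d:
  assumes H: "subgroup H G" and h: "D \<in> H" "E \<in> H" "F \<in> H"
  shows "inv B \<otimes> E \<otimes> B \<in> H \<and> B \<otimes> E \<otimes> inv B \<in> H"
proof -
  let ?H0 = "generate G {D, E, F}"
  have S: "{D, E, F} \<subseteq> carrier G" using c by auto
  have H0: "subgroup ?H0 G" by (rule generate_is_subgroup[OF S])
  have inH0: "D \<in> ?H0" "E \<in> ?H0" "F \<in> ?H0" by (auto intro: generate.incl)
  have N: "subgroup (nrm G ?H0) G" by (rule nrm_subgroup[OF H0])
  have An: "A \<in> nrm G ?H0"
  proof (rule nrm_generate[OF S c(1)])
    have tz: "inv A \<otimes> D \<otimes> A \<in> ?H0 \<and> A \<otimes> D \<otimes> inv A \<in> ?H0 \<and> inv A \<otimes> E \<otimes> A \<in> ?H0 \<and> A \<otimes> E \<otimes> inv A \<in> ?H0"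
      by (rule triple_z[OF c(1) c(4) c(5) t2 H0 inH0(1) inH0(2)])
    have af: "inv A \<otimes> F \<otimes> A = F \<and> A \<otimes> F \<otimes> inv A = F" using comm_conj[OF c(1) c(6)] AF by simp
    fix s assume "s \<in> {D, E, F}"
    then show "inv A \<otimes> s \<otimes> A \<in> ?H0" "A \<otimes> s \<otimes> inv A \<in> ?H0" using tz af inH0 by auto
  qed
  have Cn: "C \<in> nrm G ?H0"
  proof (rule nrm_generate[OF S c(3)])
    have tz: "inv C \<otimes> E \<otimes> C \<in> ?H0 \<and> C \<otimes> E \<otimes> inv C \<in> ?H0 \<and> inv C \<otimes> F \<otimes> C \<in> ?H0 \<and> C \<otimes> F \<otimes> inv C \<in> ?H0"
      by (rule triple_z[OF c(3) c(5) c(6) t4 H0 inH0(2) inH0(3)])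
    have cd: "inv C \<otimes> D \<otimes> C = D \<and> C \<otimes> D \<otimes> inv C = D" using comm_conj[OF c(3) c(4)] DC by simp
    fix s assume "s \<in> {D, E, F}"
    then show "inv C \<otimes> s \<otimes> C \<in> ?H0" "C \<otimes> s \<otimes> inv C \<in> ?H0" using tz cd inH0 by auto
  qed
  have u: "inv B \<otimes> C \<otimes> B \<in> nrm G ?H0 \<and> B \<otimes> C \<otimes> inv B \<in> nrm G ?H0"
    using triple_y[OF c(1) c(2) c(3) t1 N An Cn] by blast
  have Y: "inv C \<otimes> E \<otimes> C \<in> ?H0" by (rule nrm_conj1[OF Cn inH0(2)])
  have "inv B \<otimes> E \<otimes> B \<in> ?H0 \<and> B \<otimes> E \<otimes> inv B \<in> ?H0"
    unfolding il_eq3 il_eq4 using u Y nrm_conj2 by blast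
  moreover have "?H0 \<subseteq> H" by (rule generate_subgroup_incl) (use h H in auto)
  ultimately show ?thesis by blast
qed

end

end

lemma mult3: "u \<in> pb_words n \<Longrightarrow> v \<in> pb_words n \<Longrightarrow> w \<in> pb_words n \<Longrightarrow>
  cls n u \<otimes>\<^bsub>PB n\<^esub> cls n v \<otimes>\<^bsub>PB n\<^esub> cls n w = cls n (u @ v @ w)"
  by (simp add: mult_cls)

lemma mult2: "u \<in> pb_words n \<Longrightarrow> v \<in> pb_words n \<Longrightarrow>
  cls n u \<otimes>\<^bsub>PB n\<^esub> cls n v = cls n (u @ v)"
  by (simp add: mult_cls)

lemma mult4: "u \<in> pb_words n \<Longrightarrow> v \<in> pb_words n \<Longrightarrow> w \<in> pb_words n \<Longrightarrow> x \<in> pb_words n \<Longrightarrow>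
  cls n u \<otimes>\<^bsub>PB n\<^esub> cls n v \<otimes>\<^bsub>PB n\<^esub> cls n w \<otimes>\<^bsub>PB n\<^esub> cls n x = cls n (u @ v @ w @ x)"
  by (simp add: mult_cls)

lemma cls_rel: "(u, v) \<in> pb_rels n \<Longrightarrow> cls n u = cls n v"
  by (rule cls_eqI[OF pb_eq.rel])

lemma pgen_carrier: "1 \<le> a \<Longrightarrow> a < b \<Longrightarrow> b \<le> n \<Longrightarrow> pgen n a b \<in> carrier (PB n)"
  by (simp add: pgen_def cls_carrier pw_words)

lemma inv_pgen: assumes "1 \<le> a" "a < b" "b \<le> n"
  shows "inv\<^bsub>PB n\<^esub> (pgen n a b) = cls n (pwi a b)"
proof -
  interpret group "PB n" by (rule group_PB)
  have c: "pb_eq n [((a, b), False), inv_letter ((a, b), False)] []"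
    by (rule pb_eq.cancel) (use assms in \<open>simp add: pb_letters_def\<close>)
  have "cls n (pwi a b) \<otimes>\<^bsub>PB n\<^esub> pgen n a b = \<one>\<^bsub>PB n\<^esub>"
  proof -
    have "cls n (pwi a b) \<otimes>\<^bsub>PB n\<^esub> cls n (pw a b) = cls n (pwi a b @ pw a b)"
      using assms by (simp add: mult_cls pw_words pwi_words)
    also have "\<dots> = cls n []" using c by (simp add: pwi_def pw_def cls_eqI)
    finally show ?thesis by (simp add: pgen_def one_PB)
  qed
  then show ?thesis
    using inv_equality assms pgen_carrier cls_carrier pwi_words by blast
qed

lemma relA: assumes "1 \<le> a" "a < b" "b < c" "c \<le> n"
  shows "trip (PB n) (pgen n a b) (pgen n a c) (pgen n b c)"
proof -
  have w: "pw a b \<in> pb_words n" "pw a c \<in> pb_words n" "pw b c \<in> pb_words n"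
    using assms by (auto intro: pw_words)
  have r1: "(pw a b @ pw a c @ pw b c, pw a c @ pw b c @ pw a b) \<in> pb_rels n"
    unfolding pb_rels_def using assms by blast
  have r2: "(pw a c @ pw b c @ pw a b, pw b c @ pw a b @ pw a c) \<in> pb_rels n"
    unfolding pb_rels_def using assms by blast
  show ?thesis unfolding trip_def pgen_def using w cls_rel[OF r1] cls_rel[OF r2]
    by (simp add: mult3)
qed

lemma relB1: assumes "1 \<le> a" "a < b" "b < c" "c < d" "d \<le> n"
  shows "pgen n a b \<otimes>\<^bsub>PB n\<^esub> pgen n c d = pgen n c d \<otimes>\<^bsub>PB n\<^esub> pgen n a b"
proof -
  have w: "pw a b \<in> pb_words n" "pw c d \<in> pb_words n"
    using assms by (auto intro: pw_words)
  have r1: "(pw a b @ pw c d, pw c d @ pw a b) \<in> pb_rels n"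
    unfolding pb_rels_def using assms by blast
  show ?thesis unfolding pgen_def using w cls_rel[OF r1] by (simp add: mult2)
qed

lemma relB2: assumes "1 \<le> a" "a < b" "b < c" "c < d" "d \<le> n"
  shows "pgen n a d \<otimes>\<^bsub>PB n\<^esub> pgen n b c = pgen n b c \<otimes>\<^bsub>PB n\<^esub> pgen n a d"
proof -
  have w: "pw a d \<in> pb_words n" "pw b c \<in> pb_words n"
    using assms by (auto intro: pw_words)
  have r1: "(pw a d @ pw b c, pw b c @ pw a d) \<in> pb_rels n"
    unfolding pb_rels_def using assms by blast
  show ?thesis unfolding pgen_def using w cls_rel[OF r1] by (simp add: mult2)
qed

lemma relC: assumes "1 \<le> a" "a < b" "b < c" "c < d" "d \<le> n"
  shows "pgen n a c \<otimes>\<^bsub>PB n\<^esub> inv\<^bsub>PB n\<^esub> (pgen n b c) \<otimes>\<^bsub>PB n\<^esub> pgen n b d \<otimes>\<^bsub>PB n\<^esub> pgen n b c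
       = inv\<^bsub>PB n\<^esub> (pgen n b c) \<otimes>\<^bsub>PB n\<^esub> pgen n b d \<otimes>\<^bsub>PB n\<^esub> pgen n b c \<otimes>\<^bsub>PB n\<^esub> pgen n a c"
proof -
  have w: "pw a c \<in> pb_words n" "pw b c \<in> pb_words n" "pw b d \<in> pb_words n" "pwi b c \<in> pb_words n"
    using assms by (auto intro: pw_words pwi_words)
  have r1: "(pw a c @ pwi b c @ pw b d @ pw b c, pwi b c @ pw b d @ pw b c @ pw a c) \<in> pb_rels n"
    unfolding pb_rels_def using assms by blast
  have i: "inv\<^bsub>PB n\<^esub> (pgen n b c) = cls n (pwi b c)" using assms by (simp add: inv_pgen)
  show ?thesis unfolding i unfolding pgen_def using w cls_rel[OF r1] by (simp add: mult4)
qed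


definition gens :: "nat \<Rightarrow> pb_word set set" where
  "gens n = {pgen n a b | a b. 1 \<le> a \<and> a < b \<and> b \<le> n}"

lemma gens_carrier: "gens n \<subseteq> carrier (PB n)"
  by (auto simp: gens_def pgen_carrier)

lemma cls_letter_gen:
  assumes "l \<in> pb_letters n"
  shows "cls n [l] \<in> generate (PB n) (gens n)"
proof -
  obtain a b e where l: "l = ((a, b), e)" and v: "1 \<le> a" "a < b" "b \<le> n"
    using assms by (auto simp: pb_letters_def)
  have g: "pgen n a b \<in> gens n" using v by (auto simp: gens_def)
  show ?thesis
  proof (cases e)
    case True
    then have "cls n [l] = pgen n a b" by (simp add: l pgen_def pw_def)
    then show ?thesis using g by (simp add: generate.incl)
  next
    case False
    then have "cls n [l] = inv\<^bsub>PB n\<^esub> (pgen n a b)" using v by (simp add: l inv_pgen pwi_def)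
    then show ?thesis using g by (simp add: generate.inv)
  qed
qed

lemma generate_gens: "generate (PB n) (gens n) = carrier (PB n)"
proof
  interpret group "PB n" by (rule group_PB)
  show "generate (PB n) (gens n) \<subseteq> carrier (PB n)" by (rule generate_incl[OF gens_carrier])
  show "carrier (PB n) \<subseteq> generate (PB n) (gens n)"
  proof
    fix x assume "x \<in> carrier (PB n)"
    then obtain w where x: "x = cls n w" and w: "w \<in> pb_words n" by (auto simp: carrier_PB)
    have "cls n w \<in> generate (PB n) (gens n)" using w
    proof (induction w)
      case Nil
      then show ?case using generate.one[of "PB n" "gens n"] by (simp add: one_PB)
    next
      case (Cons l w)
      have "cls n (l # w) = cls n [l] \<otimes>\<^bsub>PB n\<^esub> cls n w"
        using Cons.prems by (simp add: mult_cls)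
      moreover have "cls n [l] \<in> generate (PB n) (gens n)"
        by (rule cls_letter_gen) (use Cons.prems in simp)
      ultimately show ?case using Cons by (auto intro: generate.eng)
    qed
    then show "x \<in> generate (PB n) (gens n)" using x by simp
  qed
qed

section \<open>Deleting a strand\<close>

definition keep :: "nat \<Rightarrow> pb_letter \<Rightarrow> bool" where
  "keep j l \<longleftrightarrow> fst (fst l) \<noteq> j \<and> snd (fst l) \<noteq> j"

definition del :: "nat \<Rightarrow> pb_word \<Rightarrow> pb_word" where
  "del j w = filter (keep j) w"

lemma del_words: "w \<in> pb_words n \<Longrightarrow> del j w \<in> pb_words n"
  by (auto simp: del_def pb_words_def)

lemma del_append[simp]: "del j (u @ v) = del j u @ del j v"
  by (simp add: del_def)

lemma keep_inv[simp]: "keep j (inv_letter l) = keep j l"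
  by (cases l) (auto simp: keep_def)

lemma del_pw: "del j (pw a b) = (if a \<noteq> j \<and> b \<noteq> j then pw a b else [])"
  by (simp add: del_def pw_def keep_def)

lemma del_pwi: "del j (pwi a b) = (if a \<noteq> j \<and> b \<noteq> j then pwi a b else [])"
  by (simp add: del_def pwi_def keep_def)

lemma pwi_pw_cancel: "1 \<le> b \<Longrightarrow> b < c \<Longrightarrow> c \<le> n \<Longrightarrow> pb_eq n (pwi b c @ pw b c) []"
  using pb_eq.cancel[of "((b, c), False)" n] by (simp add: pb_letters_def pwi_def pw_def)

lemma del_rel:
  assumes "(u, v) \<in> pb_rels n"
  shows "pb_eq n (del j u) (del j v)"
proof -
  have uv: "u \<in> pb_words n" "v \<in> pb_words n" using rels_words[OF assms] by auto
  have same: "del j u = del j v \<Longrightarrow> ?thesis" by (metis pb_eq.refl del_words uv(1))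
  have id: "del j u = u \<Longrightarrow> del j v = v \<Longrightarrow> ?thesis" using assms by (simp add: pb_eq.rel)
  from assms show ?thesis
    unfolding pb_rels_def
  proof (elim UnE CollectE exE conjE)
    fix a b c assume e: "(u, v) = (pw a b @ pw a c @ pw b c, pw a c @ pw b c @ pw a b)"
      and o: "1 \<le> a" "a < b" "b < c" "c \<le> n"
    show ?thesis
    proof (cases "j = a \<or> j = b \<or> j = c")
      case True then show ?thesis using e o by (intro same) (auto simp: del_pw)
    next
      case False then show ?thesis using e o by (intro id) (auto simp: del_pw)
    qed
  next
    fix a b c assume e: "(u, v) = (pw a c @ pw b c @ pw a b, pw b c @ pw a b @ pw a c)"
      and o: "1 \<le> a" "a < b" "b < c" "c \<le> n"
    show ?thesis
    proof (cases "j = a \<or> j = b \<or> j = c")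
      case True then show ?thesis using e o by (intro same) (auto simp: del_pw)
    next
      case False then show ?thesis using e o by (intro id) (auto simp: del_pw)
    qed
  next
    fix a b c d assume e: "(u, v) = (pw a b @ pw c d, pw c d @ pw a b)"
      and o: "1 \<le> a" "a < b" "b < c" "c < d" "d \<le> n"
    show ?thesis
    proof (cases "j = a \<or> j = b \<or> j = c \<or> j = d")
      case True then show ?thesis using e o by (intro same) (auto simp: del_pw)
    next
      case False then show ?thesis using e o by (intro id) (auto simp: del_pw)
    qed
  next
    fix a b c d assume e: "(u, v) = (pw a d @ pw b c, pw b c @ pw a d)"
      and o: "1 \<le> a" "a < b" "b < c" "c < d" "d \<le> n"
    show ?thesis
    proof (cases "j = a \<or> j = b \<or> j = c \<or> j = d")
      case True then show ?thesis using e o by (intro same) (auto simp: del_pw)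
    next
      case False then show ?thesis using e o by (intro id) (auto simp: del_pw)
    qed
  next
    fix a b c d assume e: "(u, v) = (pw a c @ pwi b c @ pw b d @ pw b c, pwi b c @ pw b d @ pw b c @ pw a c)"
      and o: "1 \<le> a" "a < b" "b < c" "c < d" "d \<le> n"
    show ?thesis
    proof (cases "j = d")
      case True
      have du: "del j u = pw a c @ (pwi b c @ pw b c) @ []" and dv: "del j v = [] @ (pwi b c @ pw b c) @ pw a c"
        using e o True by (auto simp: del_pw del_pwi)
      have w: "pw a c \<in> pb_words n" using o by (auto intro: pw_words)
      have c1: "pb_eq n (pw a c @ (pwi b c @ pw b c) @ []) (pw a c @ [] @ [])"
        by (rule pb_eq.cong[OF pwi_pw_cancel]) (use o w in auto)
      have c2: "pb_eq n ([] @ (pwi b c @ pw b c) @ pw a c) ([] @ [] @ pw a c)"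
        by (rule pb_eq.cong[OF pwi_pw_cancel]) (use o w in auto)
      show ?thesis unfolding du dv using c1 c2 by (auto intro: pb_eq.trans pb_eq.sym)
    next
      case False
      show ?thesis
      proof (cases "j = a \<or> j = b \<or> j = c")
        case True then show ?thesis using e o False by (intro same) (auto simp: del_pw del_pwi)
      next
        case False2: False then show ?thesis using e o False by (intro id) (auto simp: del_pw del_pwi)
      qed
    qed
  qed
qed

lemma del_eq: "pb_eq n u v \<Longrightarrow> pb_eq n (del j u) (del j v)"
proof (induction rule: pb_eq.induct)
  case (refl w)
  then show ?case by (simp add: del_words pb_eq.refl)
next
  case (sym u v)
  then show ?case by (simp add: pb_eq.sym)
next
  case (trans u v w)
  then show ?case by (blast intro: pb_eq.trans)
next
  case (cong u v x y)
  then show ?case by (simp add: pb_eq.cong del_words)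
next
  case (cancel l)
  show ?case
  proof (cases "keep j l")
    case True
    then show ?thesis using cancel by (simp add: del_def pb_eq.cancel)
  next
    case False
    then show ?thesis by (simp add: del_def pb_eq.refl)
  qed
next
  case (rel u v)
  then show ?case by (rule del_rel)
qed

definition dmap :: "nat \<Rightarrow> nat \<Rightarrow> pb_word set \<Rightarrow> pb_word set" where
  "dmap n j X = (\<Union>w\<in>X. cls n (del j w))"

lemma dmap_cls: assumes "w \<in> pb_words n" shows "dmap n j (cls n w) = cls n (del j w)"
proof -
  have e: "\<And>w'. w' \<in> cls n w \<Longrightarrow> cls n (del j w') = cls n (del j w)"
    by (metis cls_eqI in_cls pb_eq.sym del_eq)
  have "w \<in> cls n w" using assms by (simp add: in_cls pb_eq.refl)
  then show ?thesis unfolding dmap_def using e by blast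
qed

context
  fixes n j :: nat
begin

interpretation G: group "PB n" by (rule group_PB)

lemma dmap_carrier: "x \<in> carrier (PB n) \<Longrightarrow> dmap n j x \<in> carrier (PB n)"
  by (auto simp: carrier_PB dmap_cls del_words)

lemma dmap_mult: "x \<in> carrier (PB n) \<Longrightarrow> y \<in> carrier (PB n) \<Longrightarrow>
   dmap n j (x \<otimes>\<^bsub>PB n\<^esub> y) = dmap n j x \<otimes>\<^bsub>PB n\<^esub> dmap n j y"
  by (auto simp: carrier_PB dmap_cls del_words mult_cls)

lemma dmap_one: "dmap n j \<one>\<^bsub>PB n\<^esub> = \<one>\<^bsub>PB n\<^esub>"
  by (simp add: one_PB dmap_cls del_def)

lemma dmap_inv: "x \<in> carrier (PB n) \<Longrightarrow> dmap n j (inv\<^bsub>PB n\<^esub> x) = inv\<^bsub>PB n\<^esub> (dmap n j x)"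
proof -
  assume x: "x \<in> carrier (PB n)"
  have "dmap n j (inv\<^bsub>PB n\<^esub> x) \<otimes>\<^bsub>PB n\<^esub> dmap n j x = \<one>\<^bsub>PB n\<^esub>"
    using x by (simp add: dmap_mult[symmetric] dmap_one)
  then show ?thesis using x by (simp add: G.inv_equality dmap_carrier)
qed

lemma dmap_pgen: "1 \<le> a \<Longrightarrow> a < b \<Longrightarrow> b \<le> n \<Longrightarrow>
  dmap n j (pgen n a b) = (if a = j \<or> b = j then \<one>\<^bsub>PB n\<^esub> else pgen n a b)"
  by (auto simp: pgen_def dmap_cls pw_words del_pw one_PB)

lemma kernel_subgroup: "subgroup {x \<in> carrier (PB n). dmap n j x = \<one>\<^bsub>PB n\<^esub>} (PB n)"
  by (rule G.subgroupI) (auto simp: dmap_mult dmap_inv dmap_one intro!: exI[of _ "\<one>\<^bsub>PB n\<^esub>"])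

lemma fix_subgroup: "subgroup {x \<in> carrier (PB n). dmap n j x = x} (PB n)"
  by (rule G.subgroupI) (auto simp: dmap_mult dmap_inv dmap_one intro!: exI[of _ "\<one>\<^bsub>PB n\<^esub>"])

lemma Q_kernel: "x \<in> QS n {j} \<Longrightarrow> dmap n j x = \<one>\<^bsub>PB n\<^esub>"
proof -
  assume x: "x \<in> QS n {j}"
  have "QS n {j} \<subseteq> {x \<in> carrier (PB n). dmap n j x = \<one>\<^bsub>PB n\<^esub>}"
    unfolding QS_def
    by (rule G.generate_subgroup_incl[OF _ kernel_subgroup]) (auto simp: pgen_carrier dmap_pgen)
  then show ?thesis using x by blast
qed

lemma P_fix: "x \<in> PS n ({1..n} - {j}) \<Longrightarrow> dmap n j x = x"
proof -
  assume x: "x \<in> PS n ({1..n} - {j})"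
  have "PS n ({1..n} - {j}) \<subseteq> {x \<in> carrier (PB n). dmap n j x = x}"
    unfolding PS_def
    by (rule G.generate_subgroup_incl[OF _ fix_subgroup]) (auto simp: pgen_carrier dmap_pgen)
  then show ?thesis using x by blast
qed

end


section \<open>Normality of Q_j\<close>

lemma il_PB:
  assumes o: "1 \<le> a" "a < b" "b < c" "c < d" "d \<le> n" and H: "subgroup H (PB n)"
  shows "pgen n a b \<in> H \<and> pgen n a c \<in> H \<and> pgen n a d \<in> H \<longrightarrow>
      inv\<^bsub>PB n\<^esub> (pgen n b d) \<otimes>\<^bsub>PB n\<^esub> pgen n a c \<otimes>\<^bsub>PB n\<^esub> pgen n b d \<in> H \<and>
      pgen n b d \<otimes>\<^bsub>PB n\<^esub> pgen n a c \<otimes>\<^bsub>PB n\<^esub> inv\<^bsub>PB n\<^esub> (pgen n b d) \<in> H"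
   "pgen n a c \<in> H \<and> pgen n b c \<in> H \<and> pgen n c d \<in> H \<longrightarrow>
      inv\<^bsub>PB n\<^esub> (pgen n b d) \<otimes>\<^bsub>PB n\<^esub> pgen n a c \<otimes>\<^bsub>PB n\<^esub> pgen n b d \<in> H \<and>
      pgen n b d \<otimes>\<^bsub>PB n\<^esub> pgen n a c \<otimes>\<^bsub>PB n\<^esub> inv\<^bsub>PB n\<^esub> (pgen n b d) \<in> H"
   "pgen n a b \<in> H \<and> pgen n b c \<in> H \<and> pgen n b d \<in> H \<longrightarrow>
      inv\<^bsub>PB n\<^esub> (pgen n a c) \<otimes>\<^bsub>PB n\<^esub> pgen n b d \<otimes>\<^bsub>PB n\<^esub> pgen n a c \<in> H \<and>
      pgen n a c \<otimes>\<^bsub>PB n\<^esub> pgen n b d \<otimes>\<^bsub>PB n\<^esub> inv\<^bsub>PB n\<^esub> (pgen n a c) \<in> H"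
   "pgen n a d \<in> H \<and> pgen n b d \<in> H \<and> pgen n c d \<in> H \<longrightarrow>
      inv\<^bsub>PB n\<^esub> (pgen n a c) \<otimes>\<^bsub>PB n\<^esub> pgen n b d \<otimes>\<^bsub>PB n\<^esub> pgen n a c \<in> H \<and>
      pgen n a c \<otimes>\<^bsub>PB n\<^esub> pgen n b d \<otimes>\<^bsub>PB n\<^esub> inv\<^bsub>PB n\<^esub> (pgen n a c) \<in> H"
proof -
  interpret G: group "PB n" by (rule group_PB)
  have c: "pgen n a b \<in> carrier (PB n)" "pgen n a c \<in> carrier (PB n)" "pgen n b c \<in> carrier (PB n)"
     "pgen n a d \<in> carrier (PB n)" "pgen n b d \<in> carrier (PB n)" "pgen n c d \<in> carrier (PB n)"
    using o by (auto intro: pgen_carrier)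
  have t1: "trip (PB n) (pgen n a b) (pgen n a c) (pgen n b c)" using o by (intro relA) auto
  have t2: "trip (PB n) (pgen n a b) (pgen n a d) (pgen n b d)" using o by (intro relA) auto
  have t3: "trip (PB n) (pgen n a c) (pgen n a d) (pgen n c d)" using o by (intro relA) auto
  have t4: "trip (PB n) (pgen n b c) (pgen n b d) (pgen n c d)" using o by (intro relA) auto
  have AF: "pgen n a b \<otimes>\<^bsub>PB n\<^esub> pgen n c d = pgen n c d \<otimes>\<^bsub>PB n\<^esub> pgen n a b" using o by (intro relB1) auto
  have DC: "pgen n a d \<otimes>\<^bsub>PB n\<^esub> pgen n b c = pgen n b c \<otimes>\<^bsub>PB n\<^esub> pgen n a d" using o by (intro relB2) auto
  have RC: "pgen n a c \<otimes>\<^bsub>PB n\<^esub> inv\<^bsub>PB n\<^esub> (pgen n b c) \<otimes>\<^bsub>PB n\<^esub> pgen n b d \<otimes>\<^bsub>PB n\<^esub> pgen n b c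
       = inv\<^bsub>PB n\<^esub> (pgen n b c) \<otimes>\<^bsub>PB n\<^esub> pgen n b d \<otimes>\<^bsub>PB n\<^esub> pgen n b c \<otimes>\<^bsub>PB n\<^esub> pgen n a c"
    using o by (intro relC) auto
  note ctx = c t1 t2 t3 t4 AF DC RC H
  show "pgen n a b \<in> H \<and> pgen n a c \<in> H \<and> pgen n a d \<in> H \<longrightarrow>
      inv\<^bsub>PB n\<^esub> (pgen n b d) \<otimes>\<^bsub>PB n\<^esub> pgen n a c \<otimes>\<^bsub>PB n\<^esub> pgen n b d \<in> H \<and>
      pgen n b d \<otimes>\<^bsub>PB n\<^esub> pgen n a c \<otimes>\<^bsub>PB n\<^esub> inv\<^bsub>PB n\<^esub> (pgen n b d) \<in> H"
    using G.il_a[OF ctx] by blast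
  show "pgen n a c \<in> H \<and> pgen n b c \<in> H \<and> pgen n c d \<in> H \<longrightarrow>
      inv\<^bsub>PB n\<^esub> (pgen n b d) \<otimes>\<^bsub>PB n\<^esub> pgen n a c \<otimes>\<^bsub>PB n\<^esub> pgen n b d \<in> H \<and>
      pgen n b d \<otimes>\<^bsub>PB n\<^esub> pgen n a c \<otimes>\<^bsub>PB n\<^esub> inv\<^bsub>PB n\<^esub> (pgen n b d) \<in> H"
    using G.il_c[OF ctx] by blast
  show "pgen n a b \<in> H \<and> pgen n b c \<in> H \<and> pgen n b d \<in> H \<longrightarrow>
      inv\<^bsub>PB n\<^esub> (pgen n a c) \<otimes>\<^bsub>PB n\<^esub> pgen n b d \<otimes>\<^bsub>PB n\<^esub> pgen n a c \<in> H \<and>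
      pgen n a c \<otimes>\<^bsub>PB n\<^esub> pgen n b d \<otimes>\<^bsub>PB n\<^esub> inv\<^bsub>PB n\<^esub> (pgen n a c) \<in> H"
    using G.il_b[OF ctx] by blast
  show "pgen n a d \<in> H \<and> pgen n b d \<in> H \<and> pgen n c d \<in> H \<longrightarrow>
      inv\<^bsub>PB n\<^esub> (pgen n a c) \<otimes>\<^bsub>PB n\<^esub> pgen n b d \<otimes>\<^bsub>PB n\<^esub> pgen n a c \<in> H \<and>
      pgen n a c \<otimes>\<^bsub>PB n\<^esub> pgen n b d \<otimes>\<^bsub>PB n\<^esub> inv\<^bsub>PB n\<^esub> (pgen n a c) \<in> H"
    using G.il_d[OF ctx] by blast
qed

lemma Q_subgroup: "subgroup (QS n S) (PB n)"
proof -
  interpret G: group "PB n" by (rule group_PB)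
  show ?thesis unfolding QS_def by (rule G.generate_is_subgroup) (auto intro: pgen_carrier)
qed

lemma P_subgroup: "subgroup (PS n S) (PB n)"
proof -
  interpret G: group "PB n" by (rule group_PB)
  show ?thesis unfolding PS_def by (rule G.generate_is_subgroup) (auto intro: pgen_carrier)
qed

lemma Q_mem: "1 \<le> a \<Longrightarrow> a < b \<Longrightarrow> b \<le> n \<Longrightarrow> a = j \<or> b = j \<Longrightarrow> pgen n a b \<in> QS n {j}"
  unfolding QS_def by (rule generate.incl) blast

lemma conj_gen:
  assumes o: "1 \<le> a" "a < b" "b \<le> n" "1 \<le> c" "c < d" "d \<le> n"
    and j: "a = j \<or> b = j" "c \<noteq> j" "d \<noteq> j"
  shows "inv\<^bsub>PB n\<^esub> (pgen n c d) \<otimes>\<^bsub>PB n\<^esub> pgen n a b \<otimes>\<^bsub>PB n\<^esub> pgen n c d \<in> QS n {j} \<and>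
         pgen n c d \<otimes>\<^bsub>PB n\<^esub> pgen n a b \<otimes>\<^bsub>PB n\<^esub> inv\<^bsub>PB n\<^esub> (pgen n c d) \<in> QS n {j}"
proof -
  interpret G: group "PB n" by (rule group_PB)
  let ?Q = "QS n {j}"
  have Q: "subgroup ?Q (PB n)" by (rule Q_subgroup)
  have qm: "\<And>x y. 1 \<le> x \<Longrightarrow> x < y \<Longrightarrow> y \<le> n \<Longrightarrow> x = j \<or> y = j \<Longrightarrow> pgen n x y \<in> ?Q"
    by (rule Q_mem)
  have pc: "\<And>x y. 1 \<le> x \<Longrightarrow> x < y \<Longrightarrow> y \<le> n \<Longrightarrow> pgen n x y \<in> carrier (PB n)"
    by (rule pgen_carrier)
  have sQ: "pgen n a b \<in> ?Q" using o j by (intro qm) auto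
  have comm_case: "?thesis" if e: "pgen n c d \<otimes>\<^bsub>PB n\<^esub> pgen n a b = pgen n a b \<otimes>\<^bsub>PB n\<^esub> pgen n c d"
    using G.comm_conj[OF pc[OF o(4-6)] pc[OF o(1-3)] e] sQ by simp
  consider (ac) "a = c" | (ad) "a = d" | (bc) "b = c" | (bd) "b = d"
    | (dist) "a \<noteq> c" "a \<noteq> d" "b \<noteq> c" "b \<noteq> d" by blast
  then show ?thesis
  proof cases
    case ac
    then have "b \<noteq> d" using j by auto
    then consider "b < d" | "d < b" by linarith
    then show ?thesis
    proof cases
      case 1
      have t: "trip (PB n) (pgen n a b) (pgen n a d) (pgen n b d)" using o 1 by (intro relA) auto
      show ?thesis using G.triple_y[OF pc pc pc t Q qm qm] o 1 j ac by auto
    next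
      case 2
      have t: "trip (PB n) (pgen n a d) (pgen n a b) (pgen n d b)" using o 2 ac by (intro relA) auto
      show ?thesis using G.triple_z[OF pc pc pc t Q qm qm] o 2 j ac by auto
    qed
  next
    case ad
    have t: "trip (PB n) (pgen n c a) (pgen n c b) (pgen n a b)" using o ad by (intro relA) auto
    show ?thesis using G.triple_z[OF pc pc pc t Q qm qm] o j ad by auto
  next
    case bc
    have t: "trip (PB n) (pgen n a b) (pgen n a d) (pgen n b d)" using o bc by (intro relA) auto
    show ?thesis using G.triple_x[OF pc pc pc t Q qm qm] o j bc by auto
  next
    case bd
    then have "a \<noteq> c" using j by auto
    then consider "a < c" | "c < a" by linarith
    then show ?thesis
    proof cases
      case 1
      have t: "trip (PB n) (pgen n a c) (pgen n a b) (pgen n c b)" using o 1 bd by (intro relA) auto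
      show ?thesis using G.triple_x[OF pc pc pc t Q qm qm] o 1 j bd by auto
    next
      case 2
      have t: "trip (PB n) (pgen n c a) (pgen n c b) (pgen n a b)" using o 2 bd by (intro relA) auto
      show ?thesis using G.triple_y[OF pc pc pc t Q qm qm] o 2 j bd by auto
    qed
  next
    case dist
    consider "b < c" | "d < a" | "a < c" "d < b" | "c < a" "b < d" | "a < c" "c < b" "b < d"
      | "c < a" "a < d" "d < b"
      using dist o by linarith
    then show ?thesis
    proof cases
      case 1
      show ?thesis by (rule comm_case) (use relB1[of a b c d n] o 1 in auto)
    next
      case 2
      show ?thesis by (rule comm_case) (use relB1[of c d a b n] o 2 in auto)
    next
      case 3
      show ?thesis by (rule comm_case) (use relB2[of a c d b n] o 3 in auto)
    next
      case 4
      show ?thesis by (rule comm_case) (use relB2[of c a b d n] o 4 in auto)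
    next
      case 5
      note il = il_PB[of a c b d n ?Q, OF _ _ _ _ _ Q]
      show ?thesis
      proof (cases "a = j")
        case True
        show ?thesis using il(1) o 5 True qm by auto
      next
        case False
        then have "b = j" using j by auto
        then show ?thesis using il(2) o 5 qm by auto
      qed
    next
      case 6
      note il = il_PB[of c a d b n ?Q, OF _ _ _ _ _ Q]
      show ?thesis
      proof (cases "a = j")
        case True
        show ?thesis using il(3) o 6 True qm by auto
      next
        case False
        then have "b = j" using j by auto
        then show ?thesis using il(4) o 6 qm by auto
      qed
    qed
  qed
qed

lemma Q_normal: "nrm (PB n) (QS n {j}) = carrier (PB n)"
proof -
  interpret G: group "PB n" by (rule group_PB)
  have Q: "subgroup (QS n {j}) (PB n)" by (rule Q_subgroup)
  have "gens n \<subseteq> nrm (PB n) (QS n {j})"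
  proof
    fix h assume "h \<in> gens n"
    then obtain c d where h: "h = pgen n c d" and o: "1 \<le> c" "c < d" "d \<le> n" by (auto simp: gens_def)
    show "h \<in> nrm (PB n) (QS n {j})"
    proof (cases "c = j \<or> d = j")
      case True
      then have "h \<in> QS n {j}" using h o Q_mem by blast
      then show ?thesis using G.subgroup_nrm[OF Q] by blast
    next
      case False
      show ?thesis unfolding h QS_def
      proof (rule G.nrm_generate)
        show "{pgen n a b |a b. 1 \<le> a \<and> a < b \<and> b \<le> n \<and> (a \<in> {j} \<or> b \<in> {j})} \<subseteq> carrier (PB n)"
          by (auto intro: pgen_carrier)
        show "pgen n c d \<in> carrier (PB n)" using o by (rule pgen_carrier)
      next
        fix s assume "s \<in> {pgen n a b |a b. 1 \<le> a \<and> a < b \<and> b \<le> n \<and> (a \<in> {j} \<or> b \<in> {j})}"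
        then obtain a b where s: "s = pgen n a b" "1 \<le> a" "a < b" "b \<le> n" "a = j \<or> b = j" by auto
        have "inv\<^bsub>PB n\<^esub> (pgen n c d) \<otimes>\<^bsub>PB n\<^esub> pgen n a b \<otimes>\<^bsub>PB n\<^esub> pgen n c d \<in> QS n {j} \<and>
         pgen n c d \<otimes>\<^bsub>PB n\<^esub> pgen n a b \<otimes>\<^bsub>PB n\<^esub> inv\<^bsub>PB n\<^esub> (pgen n c d) \<in> QS n {j}"
          by (rule conj_gen) (use s o False in auto)
        then show "inv\<^bsub>PB n\<^esub> (pgen n c d) \<otimes>\<^bsub>PB n\<^esub> s \<otimes>\<^bsub>PB n\<^esub> pgen n c d \<in> generate (PB n) {pgen n a b |a b. 1 \<le> a \<and> a < b \<and> b \<le> n \<and> (a \<in> {j} \<or> b \<in> {j})}"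
          "pgen n c d \<otimes>\<^bsub>PB n\<^esub> s \<otimes>\<^bsub>PB n\<^esub> inv\<^bsub>PB n\<^esub> (pgen n c d) \<in> generate (PB n) {pgen n a b |a b. 1 \<le> a \<and> a < b \<and> b \<le> n \<and> (a \<in> {j} \<or> b \<in> {j})}"
          unfolding QS_def s(1) by auto
      qed
    qed
  qed
  then show ?thesis using G.nrm_all[OF Q _ generate_gens] by blast
qed


section \<open>Monic commutators\<close>

lemma commut_carrier: "x \<in> carrier (PB n) \<Longrightarrow> y \<in> carrier (PB n) \<Longrightarrow> commut (PB n) x y \<in> carrier (PB n)"
proof -
  interpret G: group "PB n" by (rule group_PB)
  show "x \<in> carrier (PB n) \<Longrightarrow> y \<in> carrier (PB n) \<Longrightarrow> commut (PB n) x y \<in> carrier (PB n)"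
    by (simp add: commut_def)
qed

lemma monic_carrier: "x \<in> monic n \<Longrightarrow> x \<in> carrier (PB n)"
proof (induction rule: monic.induct)
  case (gen a b) then show ?case by (rule pgen_carrier)
next
  case (gen_inv a b)
  interpret G: group "PB n" by (rule group_PB)
  show ?case using gen_inv by (simp add: pgen_carrier)
next
  case (comm x y) then show ?case by (simp add: commut_carrier)
qed

lemma monic_inv: "x \<in> monic n \<Longrightarrow> inv\<^bsub>PB n\<^esub> x \<in> monic n"
proof (induction rule: monic.induct)
  case (gen a b) then show ?case by (rule monic.gen_inv)
next
  case (gen_inv a b)
  interpret G: group "PB n" by (rule group_PB)
  show ?case using gen_inv by (simp add: pgen_carrier monic.gen)
next
  case (comm x y)
  interpret G: group "PB n" by (rule group_PB)
  have xc: "x \<in> carrier (PB n)" "y \<in> carrier (PB n)" using comm by (auto intro: monic_carrier)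
  have e: "inv\<^bsub>PB n\<^esub> (commut (PB n) x y) = commut (PB n) y x"
    using xc by (simp add: commut_def G.inv_mult_group G.m_assoc)
  have ne: "commut (PB n) y x \<noteq> \<one>\<^bsub>PB n\<^esub>"
    using comm(3) e xc by (metis G.inv_one G.inv_inv commut_carrier)
  show ?case unfolding e by (rule monic.comm[OF comm(2) comm(1) ne])
qed

lemma commut_Q:
  assumes x: "x \<in> carrier (PB n)" and y: "y \<in> carrier (PB n)"
    and xy: "x \<in> QS n {j} \<or> y \<in> QS n {j}"
  shows "commut (PB n) x y \<in> QS n {j}"
proof -
  interpret G: group "PB n" by (rule group_PB)
  have Q: "subgroup (QS n {j}) (PB n)" by (rule Q_subgroup)
  have N: "\<And>g. g \<in> carrier (PB n) \<Longrightarrow> g \<in> nrm (PB n) (QS n {j})" using Q_normal by blast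
  from xy show ?thesis
  proof
    assume xq: "x \<in> QS n {j}"
    have "inv\<^bsub>PB n\<^esub> y \<otimes>\<^bsub>PB n\<^esub> x \<otimes>\<^bsub>PB n\<^esub> y \<in> QS n {j}" by (rule G.nrm_conj1[OF N[OF y] xq])
    then have "inv\<^bsub>PB n\<^esub> x \<otimes>\<^bsub>PB n\<^esub> (inv\<^bsub>PB n\<^esub> y \<otimes>\<^bsub>PB n\<^esub> x \<otimes>\<^bsub>PB n\<^esub> y) \<in> QS n {j}"
      using xq Q by (auto intro: subgroup.m_closed subgroup.m_inv_closed)
    then show ?thesis using x y by (simp add: commut_def G.m_assoc)
  next
    assume yq: "y \<in> QS n {j}"
    have iy: "inv\<^bsub>PB n\<^esub> y \<in> QS n {j}" using Q yq by (rule subgroup.m_inv_closed)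
    have "inv\<^bsub>PB n\<^esub> x \<otimes>\<^bsub>PB n\<^esub> inv\<^bsub>PB n\<^esub> y \<otimes>\<^bsub>PB n\<^esub> x \<in> QS n {j}" by (rule G.nrm_conj1[OF N[OF x] iy])
    then have "inv\<^bsub>PB n\<^esub> x \<otimes>\<^bsub>PB n\<^esub> inv\<^bsub>PB n\<^esub> y \<otimes>\<^bsub>PB n\<^esub> x \<otimes>\<^bsub>PB n\<^esub> y \<in> QS n {j}"
      using yq Q by (auto intro: subgroup.m_closed)
    then show ?thesis by (simp add: commut_def)
  qed
qed

lemma P_mem: "1 \<le> a \<Longrightarrow> a < b \<Longrightarrow> b \<le> n \<Longrightarrow> a \<in> S \<Longrightarrow> b \<in> S \<Longrightarrow> pgen n a b \<in> PS n S"
  unfolding PS_def by (rule generate.incl) blast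

lemma monic_dich: "x \<in> monic n \<Longrightarrow> x \<in> QS n {j} \<or> x \<in> PS n ({1..n} - {j})"
proof (induction rule: monic.induct)
  case (gen a b)
  show ?case
  proof (cases "a = j \<or> b = j")
    case True then show ?thesis using gen Q_mem by blast
  next
    case False
    then have "pgen n a b \<in> PS n ({1..n} - {j})" using gen by (intro P_mem) auto
    then show ?thesis by blast
  qed
next
  case (gen_inv a b)
  show ?case
  proof (cases "a = j \<or> b = j")
    case True then show ?thesis using gen_inv Q_mem subgroup.m_inv_closed[OF Q_subgroup] by blast
  next
    case False
    then have "pgen n a b \<in> PS n ({1..n} - {j})" using gen_inv by (intro P_mem) auto
    then show ?thesis using subgroup.m_inv_closed[OF P_subgroup] by blast
  qed
next
  case (comm x y)
  interpret G: group "PB n" by (rule group_PB)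
  have xc: "x \<in> carrier (PB n)" "y \<in> carrier (PB n)" using comm by (auto intro: monic_carrier)
  show ?case
  proof (cases "x \<in> QS n {j} \<or> y \<in> QS n {j}")
    case True then show ?thesis using commut_Q[OF xc True] by blast
  next
    case False
    then have "x \<in> PS n ({1..n} - {j})" "y \<in> PS n ({1..n} - {j})" using comm by auto
    then have "commut (PB n) x y \<in> PS n ({1..n} - {j})"
      unfolding commut_def using P_subgroup
      by (auto intro!: subgroup.m_closed subgroup.m_inv_closed)
    then show ?thesis by blast
  qed
qed

lemma PQ_trivial: "x \<in> QS n {j} \<Longrightarrow> x \<in> PS n ({1..n} - {j}) \<Longrightarrow> x = \<one>\<^bsub>PB n\<^esub>"
  using Q_kernel P_fix by metis

lemma generate_monic: "generate (PB n) (monic n) = carrier (PB n)"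
proof -
  interpret G: group "PB n" by (rule group_PB)
  have "gens n \<subseteq> monic n" by (auto simp: gens_def intro: monic.gen)
  then have "carrier (PB n) \<subseteq> generate (PB n) (monic n)"
    using G.mono_generate generate_gens by blast
  moreover have "generate (PB n) (monic n) \<subseteq> carrier (PB n)"
    by (rule G.generate_incl) (auto intro: monic_carrier)
  ultimately show ?thesis by blast
qed

definition MT :: "nat \<Rightarrow> nat set \<Rightarrow> pb_word set set" where
  "MT n T = {x \<in> monic n. \<forall>i\<in>T. x \<in> QS n {i}}"

definition BT :: "nat \<Rightarrow> nat set \<Rightarrow> pb_word set set" where
  "BT n T = {x \<in> carrier (PB n). \<forall>i\<in>T. x \<in> QS n {i}}"

lemma MT_carrier: "MT n T \<subseteq> carrier (PB n)"
  by (auto simp: MT_def monic_carrier)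

lemma GT_normal: "nrm (PB n) (generate (PB n) (MT n T)) = carrier (PB n)"
proof -
  interpret G: group "PB n" by (rule group_PB)
  let ?H = "generate (PB n) (MT n T)"
  have H: "subgroup ?H (PB n)" by (rule G.generate_is_subgroup[OF MT_carrier])
  have conj1: "inv\<^bsub>PB n\<^esub> y \<otimes>\<^bsub>PB n\<^esub> m \<otimes>\<^bsub>PB n\<^esub> y \<in> ?H" if y: "y \<in> monic n" and m: "m \<in> MT n T" for y m
  proof -
    have yc: "y \<in> carrier (PB n)" using y by (rule monic_carrier)
    have mm: "m \<in> monic n" and mq: "\<And>i. i \<in> T \<Longrightarrow> m \<in> QS n {i}" using m by (auto simp: MT_def)
    have mc: "m \<in> carrier (PB n)" using mm by (rule monic_carrier)
    have e: "inv\<^bsub>PB n\<^esub> y \<otimes>\<^bsub>PB n\<^esub> m \<otimes>\<^bsub>PB n\<^esub> y = m \<otimes>\<^bsub>PB n\<^esub> commut (PB n) m y"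
      using yc mc by (simp add: commut_def G.m_assoc)
    have mH: "m \<in> ?H" using m by (rule generate.incl)
    have cH: "commut (PB n) m y \<in> ?H"
    proof (cases "commut (PB n) m y = \<one>\<^bsub>PB n\<^esub>")
      case True then show ?thesis by (simp add: generate.one)
    next
      case False
      have "commut (PB n) m y \<in> monic n" by (rule monic.comm[OF mm y False])
      moreover have "\<forall>i\<in>T. commut (PB n) m y \<in> QS n {i}"
        using commut_Q[OF mc yc] mq by blast
      ultimately show ?thesis by (intro generate.incl) (simp add: MT_def)
    qed
    show ?thesis unfolding e by (rule subgroup.m_closed[OF H mH cH])
  qed
  have "monic n \<subseteq> nrm (PB n) ?H"
  proof
    fix y assume y: "y \<in> monic n"
    have yc: "y \<in> carrier (PB n)" using y by (rule monic_carrier)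
    show "y \<in> nrm (PB n) ?H"
    proof (rule G.nrm_generate[OF MT_carrier yc])
      fix s assume s: "s \<in> MT n T"
      show "inv\<^bsub>PB n\<^esub> y \<otimes>\<^bsub>PB n\<^esub> s \<otimes>\<^bsub>PB n\<^esub> y \<in> ?H" by (rule conj1[OF y s])
      have "inv\<^bsub>PB n\<^esub> (inv\<^bsub>PB n\<^esub> y) \<otimes>\<^bsub>PB n\<^esub> s \<otimes>\<^bsub>PB n\<^esub> inv\<^bsub>PB n\<^esub> y \<in> ?H"
        by (rule conj1[OF monic_inv[OF y] s])
      then show "y \<otimes>\<^bsub>PB n\<^esub> s \<otimes>\<^bsub>PB n\<^esub> inv\<^bsub>PB n\<^esub> y \<in> ?H" using yc by simp
    qed
  qed
  then show ?thesis using G.nrm_all[OF H _ generate_monic] by blast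
qed

lemma BT_subgroup: "subgroup (BT n T) (PB n)"
proof -
  interpret G: group "PB n" by (rule group_PB)
  show ?thesis unfolding BT_def
    by (rule G.subgroupI)
      (auto intro: subgroup.m_closed[OF Q_subgroup] subgroup.m_inv_closed[OF Q_subgroup]
            intro!: exI[of _ "\<one>\<^bsub>PB n\<^esub>"] subgroup.one_closed[OF Q_subgroup])
qed

lemma BT_eq: "finite T \<Longrightarrow> BT n T = generate (PB n) (MT n T)"
proof (induction T rule: finite_induct)
  case empty
  interpret G: group "PB n" by (rule group_PB)
  have "MT n {} = monic n" by (simp add: MT_def)
  then show ?case by (simp add: BT_def generate_monic)
next
  case (insert j T)
  interpret G: group "PB n" by (rule group_PB)
  let ?T' = "insert j T"
  let ?H = "generate (PB n) (MT n ?T')"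
  have H: "subgroup ?H (PB n)" by (rule G.generate_is_subgroup[OF MT_carrier])
  have HQ: "?H \<subseteq> QS n {j}"
    by (rule G.generate_subgroup_incl[OF _ Q_subgroup]) (auto simp: MT_def)
  have HN: "\<And>g. g \<in> carrier (PB n) \<Longrightarrow> g \<in> nrm (PB n) ?H" using GT_normal by blast
  let ?P = "PS n ({1..n} - {j})"
  have P: "subgroup ?P (PB n)" by (rule P_subgroup)
  have dec_gen: "\<exists>g p. g \<in> ?H \<and> p \<in> ?P \<and> z = g \<otimes>\<^bsub>PB n\<^esub> p" if z: "z \<in> MT n T" for z
  proof -
    have zm: "z \<in> monic n" and zq: "\<forall>i\<in>T. z \<in> QS n {i}" using z by (auto simp: MT_def)
    have zc: "z \<in> carrier (PB n)" using zm by (rule monic_carrier)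
    from monic_dich[OF zm, of j] show ?thesis
    proof
      assume "z \<in> QS n {j}"
      then have "z \<in> ?H" using zm zq by (intro generate.incl) (auto simp: MT_def)
      then show ?thesis using zc subgroup.one_closed[OF P] by (intro exI[of _ z] exI[of _ "\<one>\<^bsub>PB n\<^esub>"]) simp
    next
      assume "z \<in> ?P"
      then show ?thesis using zc subgroup.one_closed[OF H] by (intro exI[of _ "\<one>\<^bsub>PB n\<^esub>"] exI[of _ z]) simp
    qed
  qed
  have dec: "\<exists>g p. g \<in> ?H \<and> p \<in> ?P \<and> z = g \<otimes>\<^bsub>PB n\<^esub> p" if z: "z \<in> generate (PB n) (MT n T)" for z
    using z
  proof (induction rule: generate.induct)
    case one
    show ?case using subgroup.one_closed[OF H] subgroup.one_closed[OF P]
      by (intro exI[of _ "\<one>\<^bsub>PB n\<^esub>"]) simp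
  next
    case (incl h)
    then show ?case by (rule dec_gen)
  next
    case (inv h)
    then have "inv\<^bsub>PB n\<^esub> h \<in> MT n T"
      by (auto simp: MT_def monic_inv intro: subgroup.m_inv_closed[OF Q_subgroup])
    then show ?case by (rule dec_gen)
  next
    case (eng h1 h2)
    from eng.IH(1) obtain g1 p1 where 1: "g1 \<in> ?H" "p1 \<in> ?P" "h1 = g1 \<otimes>\<^bsub>PB n\<^esub> p1" by blast
    from eng.IH(2) obtain g2 p2 where 2: "g2 \<in> ?H" "p2 \<in> ?P" "h2 = g2 \<otimes>\<^bsub>PB n\<^esub> p2" by blast
    have c: "g1 \<in> carrier (PB n)" "p1 \<in> carrier (PB n)" "g2 \<in> carrier (PB n)" "p2 \<in> carrier (PB n)"
      using 1 2 subgroup.subset[OF H] subgroup.subset[OF P] by auto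
    have g: "g1 \<otimes>\<^bsub>PB n\<^esub> (p1 \<otimes>\<^bsub>PB n\<^esub> g2 \<otimes>\<^bsub>PB n\<^esub> inv\<^bsub>PB n\<^esub> p1) \<in> ?H"
      by (rule subgroup.m_closed[OF H 1(1) G.nrm_conj2[OF HN[OF c(2)] 2(1)]])
    have p: "p1 \<otimes>\<^bsub>PB n\<^esub> p2 \<in> ?P" by (rule subgroup.m_closed[OF P 1(2) 2(2)])
    have "h1 \<otimes>\<^bsub>PB n\<^esub> h2 = (g1 \<otimes>\<^bsub>PB n\<^esub> (p1 \<otimes>\<^bsub>PB n\<^esub> g2 \<otimes>\<^bsub>PB n\<^esub> inv\<^bsub>PB n\<^esub> p1)) \<otimes>\<^bsub>PB n\<^esub> (p1 \<otimes>\<^bsub>PB n\<^esub> p2)"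
      using c 1(3) 2(3) by (simp add: G.m_assoc)
    then show ?case using g p by blast
  qed
  show ?case
  proof
    show "BT n ?T' \<subseteq> ?H"
    proof
      fix x assume x: "x \<in> BT n ?T'"
      then have "x \<in> BT n T" by (auto simp: BT_def)
      then have "x \<in> generate (PB n) (MT n T)" using insert.IH by simp
      then obtain g p where gp: "g \<in> ?H" "p \<in> ?P" "x = g \<otimes>\<^bsub>PB n\<^esub> p" using dec by blast
      have xq: "x \<in> QS n {j}" using x by (auto simp: BT_def)
      have c: "g \<in> carrier (PB n)" "p \<in> carrier (PB n)"
        using gp subgroup.subset[OF H] subgroup.subset[OF P] by auto
      have "\<one>\<^bsub>PB n\<^esub> = dmap n j x" using Q_kernel[OF xq] by simp
      also have "\<dots> = dmap n j g \<otimes>\<^bsub>PB n\<^esub> dmap n j p" using gp c by (simp add: dmap_mult)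
      also have "\<dots> = p" using Q_kernel[of g n j] HQ gp P_fix[of p n j] c by auto
      finally have "p = \<one>\<^bsub>PB n\<^esub>" by simp
      then show "x \<in> ?H" using gp c by simp
    qed
    show "?H \<subseteq> BT n ?T'"
      by (rule G.generate_subgroup_incl[OF _ BT_subgroup]) (auto simp: MT_def BT_def monic_carrier)
  qed
qed


lemma PS_full: "PS n {1..n} = carrier (PB n)"
proof -
  have "{pgen n a b |a b. 1 \<le> a \<and> a < b \<and> b \<le> n \<and> a \<in> {1..n} \<and> b \<in> {1..n}} = gens n"
    by (auto simp: gens_def) force
  then show ?thesis unfolding PS_def using generate_gens by simp
qed

lemma PS_mono: "S \<subseteq> T \<Longrightarrow> PS n S \<subseteq> PS n T"
proof -
  assume st: "S \<subseteq> T"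
  interpret G: group "PB n" by (rule group_PB)
  show ?thesis unfolding PS_def by (rule G.mono_generate) (use st in blast)
qed

theorem corollary2p3:
  shows "brunnian n = generate (PB n) {x \<in> monic n. supp n x = {1..n}}"
proof -
  interpret G: group "PB n" by (rule group_PB)
  let ?N = "{1..n::nat}"
  let ?SS = "{x \<in> monic n. supp n x = ?N}"
  have B: "brunnian n = generate (PB n) (MT n ?N)"
    using BT_eq[of ?N n] by (simp add: brunnian_def BT_def)
  have SS_MT: "?SS \<subseteq> MT n ?N"
  proof
    fix x assume x: "x \<in> ?SS"
    have xm: "x \<in> monic n" and sx: "supp n x = ?N" using x by auto
    have "x \<in> QS n {i}" if i: "i \<in> ?N" for i
    proof (rule ccontr)
      assume nq: "x \<notin> QS n {i}"
      then have xp: "x \<in> PS n (?N - {i})" using monic_dich[OF xm, of i] by blast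
      have "supp n x \<subseteq> ?N - {i}" unfolding supp_def using xp by blast
      then show False using sx i by blast
    qed
    then show "x \<in> MT n ?N" using xm by (simp add: MT_def)
  qed
  have MT_SS: "MT n ?N \<subseteq> insert \<one>\<^bsub>PB n\<^esub> ?SS"
  proof
    fix x assume x: "x \<in> MT n ?N"
    have xm: "x \<in> monic n" and xq: "\<And>i. i \<in> ?N \<Longrightarrow> x \<in> QS n {i}" using x by (auto simp: MT_def)
    have xc: "x \<in> carrier (PB n)" using xm by (rule monic_carrier)
    show "x \<in> insert \<one>\<^bsub>PB n\<^esub> ?SS"
    proof (cases "x = \<one>\<^bsub>PB n\<^esub>")
      case True then show ?thesis by simp
    next
      case False
      have s1: "supp n x \<subseteq> ?N" unfolding supp_def using xc PS_full[of n] by blast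
      have s2: "?N \<subseteq> supp n x" unfolding supp_def
      proof (intro subsetI InterI)
        fix i S assume i: "i \<in> ?N" and S: "S \<in> {S. S \<subseteq> ?N \<and> x \<in> PS n S}"
        show "i \<in> S"
        proof (rule ccontr)
          assume "i \<notin> S"
          then have "S \<subseteq> ?N - {i}" using S by blast
          then have "x \<in> PS n (?N - {i})" using S PS_mono by blast
          then have "x = \<one>\<^bsub>PB n\<^esub>" using PQ_trivial xq[OF i] by blast
          then show False using False by simp
        qed
      qed
      show ?thesis using s1 s2 xm by auto
    qed
  qed
  have SSc: "?SS \<subseteq> carrier (PB n)" using monic_carrier by blast
  have sub: "subgroup (generate (PB n) ?SS) (PB n)" by (rule G.generate_is_subgroup[OF SSc])
  have "generate (PB n) (MT n ?N) \<subseteq> generate (PB n) ?SS"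
  proof (rule G.generate_subgroup_incl[OF _ sub])
    show "MT n ?N \<subseteq> generate (PB n) ?SS"
      using MT_SS generate.one[of "PB n" ?SS] generate.incl[of _ ?SS "PB n"] by blast
  qed
  moreover have "generate (PB n) ?SS \<subseteq> generate (PB n) (MT n ?N)"
    by (rule G.mono_generate[OF SS_MT])
  ultimately show ?thesis using B by blast
qed

end
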